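(* Let $0<\alpha\le\beta$ and $\theta=\beta/\alpha\ge1$. For $\mathbf w=(w_1,w_2,w_3,w_4)\in[\alpha,\beta]^4$ let $v_i=1/w_i$ and $$R_u(\mathbf w)=1-\frac14\left(\frac{v_1+v_2+v_3+v_4}{\max_{\mathbf p\in\Delta}L_{\mathbf v}(\mathbf p)}\right)^{1/3},$$ the relative loss of efficiency of the uniform design $(1/4,1/4,1/4,1/4)$, and let $R^{(u)}_{\max}=\max_{\mathbf w\in[\alpha,\beta]^4}R_u(\mathbf w)$. Then, with $\rho=\sqrt{\theta^2-\theta+1}$, $$R^{(u)}_{\max}=\begin{cases}1-\frac34\left(1+\frac3\theta\right)^{1/3}, & \theta\ge3,\\[2pt] 1-\frac18\left(2(\theta+3)(9-\theta)^2\right)^{1/3}, & \theta_*\le\theta<3,\\[2pt] 1-\frac32\left(\frac{(\theta+1)(\theta-1)^2}{(2\theta-1-\rho)(\theta-2+\rho)(\theta+1+\rho)}\right)^{1/3}, & 1<\theta<\theta_*,\\[2pt] 0, & \theta=1,\end{cases}$$ where $\theta_*\approx1.32$ is the 3rd root of $3456-5184\theta+3561\theta^2+596\theta^3-1506\theta^4+100\theta^5+\theta^6=0$.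
   Context: Setting: a $2^2$ experiment with binary response under a generalized linear model with main-effects linear predictor $\eta=\beta_0+\beta_1x_1+\beta_2x_2$; $w_i>0$ are the GLM weights $(d\mu_i/d\eta_i)^2/(\mu_i(1-\mu_i))$ at the four design points. A design is a vector $\mathbf p$ in the simplex $\Delta=\{p_i\ge0,\ \sum_ip_i=1\}$, and the $D$-criterion equals $16w_1w_2w_3w_4L_{\mathbf v}(\mathbf p)$ with $v_i=1/w_i$ and $$L_{\mathbf v}(\mathbf p)=v_4p_1p_2p_3+v_3p_1p_2p_4+v_2p_1p_3p_4+v_1p_2p_3p_4 .$$ $R_u(\mathbf w)$ equals $1-(\det(\mathbf w,\mathbf p_u)/\det(\mathbf w,\mathbf p_t))^{1/3}$, where $\mathbf p_u$ is the uniform design and $\mathbf p_t$ the $D$-optimal design for $\mathbf w$. *)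

theory Defs
  imports "HOL-Analysis.Analysis"
begin

text \<open>Designs on the four points of the 2x2 experiment are 4-tuples in the simplex.\<close>
definition simplex4 :: "(real \<times> real \<times> real \<times> real) set" where
  "simplex4 = {(p1,p2,p3,p4). p1 \<ge> 0 \<and> p2 \<ge> 0 \<and> p3 \<ge> 0 \<and> p4 \<ge> 0 \<and> p1+p2+p3+p4 = 1}"

definition Lv :: "real \<times> real \<times> real \<times> real \<Rightarrow> real \<times> real \<times> real \<times> real \<Rightarrow> real" where
  "Lv v p = (case v of (v1,v2,v3,v4) \<Rightarrow> case p of (p1,p2,p3,p4) \<Rightarrow>
      v4*p1*p2*p3 + v3*p1*p2*p4 + v2*p1*p3*p4 + v1*p2*p3*p4)"

text \<open>Relative loss of efficiency of the uniform design; v_i = 1/w_i; the max over the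
  simplex is written as a supremum (it is attained by compactness).\<close>
definition Ru :: "real \<times> real \<times> real \<times> real \<Rightarrow> real" where
  "Ru w = (case w of (w1,w2,w3,w4) \<Rightarrow>
     let v = (1/w1, 1/w2, 1/w3, 1/w4) in
     1 - (1/4) * root 3 ((1/w1 + 1/w2 + 1/w3 + 1/w4) / (SUP p\<in>simplex4. Lv v p)))"

definition box4 :: "real \<Rightarrow> real \<Rightarrow> (real \<times> real \<times> real \<times> real) set" where
  "box4 a b = {a..b} \<times> {a..b} \<times> {a..b} \<times> {a..b}"

definition sextic :: "real \<Rightarrow> real" where
  "sextic t = 3456 - 5184*t + 3561*t^2 + 596*t^3 - 1506*t^4 + 100*t^5 + t^6"

definition theta_star :: real where
  "theta_star = (THE r. sextic r = 0 \<and> card {x. sextic x = 0 \<and> x < r} = 2)"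

definition Rmax_formula :: "real \<Rightarrow> real" where
  "Rmax_formula \<theta> =
    (if \<theta> \<ge> 3 then 1 - (3/4) * root 3 (1 + 3/\<theta>)
     else if theta_star \<le> \<theta> then 1 - (1/8) * root 3 (2*(\<theta>+3)*(9-\<theta>)^2)
     else if 1 < \<theta> then
       (let \<rho> = sqrt (\<theta>^2 - \<theta> + 1) in
        1 - (3/2) * root 3 ((\<theta>+1)*(\<theta>-1)^2 /
              ((2*\<theta> - 1 - \<rho>) * (\<theta> - 2 + \<rho>) * (\<theta> + 1 + \<rho>))))
     else 0)"

end

theory Submission
  imports Defs
begin

lemma cert_helper: "0 \<le> (c::real) * (P - m) \<Longrightarrow> 0 < c \<Longrightarrow> m \<le> P" by (simp add: zero_le_mult_iff)

lemma sx_dneg13: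
  fixes x :: real
  assumes "1 \<le> x" "x \<le> 3"
  shows "1792 \<le> 5184 - 7122*x - 1788*x^2 + 6024*x^3 - 500*x^4 - 6*x^5"
proof -
  have id: "32 * ((5184 - 7122*x - 1788*x^2 + 6024*x^3 - 500*x^4 - 6*x^5) - 1792) = 10688 * (x - 1)^1 * (3 - x)^4 + 95648 * (x - 1)^2 * (3 - x)^3 + 254528 * (x - 1)^3 * (3 - x)^2 + 256384 * (x - 1)^4 * (3 - x)^1 + 86624 * (x - 1)^5"
    by algebra
  have "0 \<le> 10688 * (x - 1)^1 * (3 - x)^4 + 95648 * (x - 1)^2 * (3 - x)^3 + 254528 * (x - 1)^3 * (3 - x)^2 + 256384 * (x - 1)^4 * (3 - x)^1 + 86624 * (x - 1)^5"
    using assms by (intro add_nonneg_nonneg mult_nonneg_nonneg zero_le_power; auto)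
  then have "0 \<le> 32 * ((5184 - 7122*x - 1788*x^2 + 6024*x^3 - 500*x^4 - 6*x^5) - 1792)" unfolding id .
  then show ?thesis by (rule cert_helper) simp
qed

lemma sx_neg_mid:
  fixes x :: real
  assumes "(-100) \<le> x" "x \<le> (-2)"
  shows "3932 \<le> -3456 + 5184*x - 3561*x^2 - 596*x^3 + 1506*x^4 - 100*x^5 - 1*x^6"
proof -
  have id: "885842380864 * ((-3456 + 5184*x - 3561*x^2 - 596*x^3 + 1506*x^4 - 100*x^5 - 1*x^6) - 3932) = 151159864212 * ((-2) - x)^6 + 1294925248904 * (x - (-100))^1 * ((-2) - x)^5 + 274728716696 * (x - (-100))^2 * ((-2) - x)^4 + 17244650752 * (x - (-100))^3 * ((-2) - x)^3 + 443222836 * (x - (-100))^4 * ((-2) - x)^2 + 4284952 * (x - (-100))^5 * ((-2) - x)^1"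
    by algebra
  have "0 \<le> 151159864212 * ((-2) - x)^6 + 1294925248904 * (x - (-100))^1 * ((-2) - x)^5 + 274728716696 * (x - (-100))^2 * ((-2) - x)^4 + 17244650752 * (x - (-100))^3 * ((-2) - x)^3 + 443222836 * (x - (-100))^4 * ((-2) - x)^2 + 4284952 * (x - (-100))^5 * ((-2) - x)^1"
    using assms by (intro add_nonneg_nonneg mult_nonneg_nonneg zero_le_power; auto)
  then have "0 \<le> 885842380864 * ((-3456 + 5184*x - 3561*x^2 - 596*x^3 + 1506*x^4 - 100*x^5 - 1*x^6) - 3932)" unfolding id .
  then show ?thesis by (rule cert_helper) simp
qed

lemma sx_dpos:
  fixes x :: real
  assumes "(-2) \<le> x" "x \<le> (-(3/2))"
  shows "(175563/16) \<le> -5184 + 7122*x + 1788*x^2 - 6024*x^3 + 500*x^4 + 6*x^5"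
proof -
  have id: "(1/32) * ((-5184 + 7122*x + 1788*x^2 - 6024*x^3 + 500*x^4 + 6*x^5) - (175563/16)) = (524021/16) * ((-(3/2)) - x)^5 + (1917401/16) * (x - (-2))^1 * ((-(3/2)) - x)^4 + (1313601/8) * (x - (-2))^2 * ((-(3/2)) - x)^3 + (798921/8) * (x - (-2))^3 * ((-(3/2)) - x)^2 + (364017/16) * (x - (-2))^4 * ((-(3/2)) - x)^1"
    by algebra
  have "0 \<le> (524021/16) * ((-(3/2)) - x)^5 + (1917401/16) * (x - (-2))^1 * ((-(3/2)) - x)^4 + (1313601/8) * (x - (-2))^2 * ((-(3/2)) - x)^3 + (798921/8) * (x - (-2))^3 * ((-(3/2)) - x)^2 + (364017/16) * (x - (-2))^4 * ((-(3/2)) - x)^1"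
    using assms by (intro add_nonneg_nonneg mult_nonneg_nonneg zero_le_power; auto)
  then have "0 \<le> (1/32) * ((-5184 + 7122*x + 1788*x^2 - 6024*x^3 + 500*x^4 + 6*x^5) - (175563/16))" unfolding id .
  then show ?thesis by (rule cert_helper) simp
qed

lemma sx_pos:
  fixes x :: real
  assumes "(-(3/2)) \<le> x" "x \<le> 1"
  shows "1024 \<le> 3456 - 5184*x + 3561*x^2 + 596*x^3 - 1506*x^4 + 100*x^5 + 1*x^6"
proof -
  have id: "(15625/64) * ((3456 - 5184*x + 3561*x^2 + 596*x^3 - 1506*x^4 + 100*x^5 + 1*x^6) - 1024) = (501545/64) * (1 - x)^6 + (1191225/16) * (x - (-(3/2)))^1 * (1 - x)^5 + (1800225/16) * (x - (-(3/2)))^2 * (1 - x)^4 + 46875 * (x - (-(3/2)))^3 * (1 - x)^3 + 5700 * (x - (-(3/2)))^4 * (1 - x)^2 + 4480 * (x - (-(3/2)))^5 * (1 - x)^1"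
    by algebra
  have "0 \<le> (501545/64) * (1 - x)^6 + (1191225/16) * (x - (-(3/2)))^1 * (1 - x)^5 + (1800225/16) * (x - (-(3/2)))^2 * (1 - x)^4 + 46875 * (x - (-(3/2)))^3 * (1 - x)^3 + 5700 * (x - (-(3/2)))^4 * (1 - x)^2 + 4480 * (x - (-(3/2)))^5 * (1 - x)^1"
    using assms by (intro add_nonneg_nonneg mult_nonneg_nonneg zero_le_power; auto)
  then have "0 \<le> (15625/64) * ((3456 - 5184*x + 3561*x^2 + 596*x^3 - 1506*x^4 + 100*x^5 + 1*x^6) - 1024)" unfolding id .
  then show ?thesis by (rule cert_helper) simp
qed

lemma sx_dneg_far:
  fixes x :: real
  assumes "x \<le> -100"
  shows "0 < 5184 - 7122*x - 1788*x^2 + 6024*x^3 - 500*x^4 - 6*x^5"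
proof -
  have id: "5184 - 7122*x - 1788*x^2 + 6024*x^3 - 500*x^4 - 6*x^5 = 3958837384 * (-100 - x)^0 + 818929522 * (-100 - x)^1 + 28191012 * (-100 - x)^2 + 393976 * (-100 - x)^3 + 2500 * (-100 - x)^4 + 6 * (-100 - x)^5"
    by algebra
  have "0 \<le> 818929522 * (-100 - x)^1 + 28191012 * (-100 - x)^2 + 393976 * (-100 - x)^3 + 2500 * (-100 - x)^4 + 6 * (-100 - x)^5"
    using assms by (intro add_nonneg_nonneg mult_nonneg_nonneg zero_le_power; auto)
  then show ?thesis unfolding id by (auto intro!: add_pos_nonneg)
qed
definition sxd :: "real \<Rightarrow> real" where
  "sxd x = -5184 + 7122*x + 1788*x^2 - 6024*x^3 + 500*x^4 + 6*x^5"

lemma sx_deriv: "(sextic has_real_derivative sxd x) (at x)"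
  unfolding sextic_def sxd_def
  by (rule derivative_eq_intros refl | simp)+

lemma sx_cont: "continuous_on S sextic"
  unfolding sextic_def by (intro continuous_intros)

lemma sx_dec13:
  assumes "1 \<le> x" "x < y" "y \<le> 3"
  shows "sextic y < sextic x"
proof (rule DERIV_neg_imp_decreasing[of x y sextic])
  fix z assume "x \<le> z" "z \<le> y"
  then show "\<exists>d. DERIV sextic z :> d \<and> d < 0"
    using assms sx_deriv[of z] sx_dneg13[of z] unfolding sxd_def by (intro exI[of _ "sxd z"]) (auto simp: sxd_def)
qed (use assms in auto)

lemma sx_decfar:
  assumes "x < y" "y \<le> -100"
  shows "sextic y < sextic x"
proof (rule DERIV_neg_imp_decreasing[of x y sextic])
  fix z assume "x \<le> z" "z \<le> y"
  then show "\<exists>d. DERIV sextic z :> d \<and> d < 0"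
    using assms sx_deriv[of z] sx_dneg_far[of z] unfolding sxd_def by (intro exI[of _ "sxd z"]) (auto simp: sxd_def)
qed (use assms in auto)

lemma sx_inc2:
  assumes "-2 \<le> x" "x < y" "y \<le> -3/2"
  shows "sextic x < sextic y"
proof (rule DERIV_pos_imp_increasing[of x y sextic])
  fix z assume "x \<le> z" "z \<le> y"
  then show "\<exists>d. DERIV sextic z :> d \<and> d > 0"
    using assms sx_deriv[of z] sx_dpos[of z] unfolding sxd_def by (intro exI[of _ "sxd z"]) (auto simp: sxd_def)
qed (use assms in auto)

lemma sx_negm: "-100 \<le> x \<Longrightarrow> x \<le> -2 \<Longrightarrow> sextic x < 0"
  using sx_neg_mid[of x] unfolding sextic_def by linarith

lemma sx_posm: "-3/2 \<le> x \<Longrightarrow> x \<le> 1 \<Longrightarrow> 0 < sextic x"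
  using sx_pos[of x] unfolding sextic_def by linarith

lemma sx_roots:
  obtains r1 r2 r0 where "-114 \<le> r1" "r1 \<le> -113" "-2 \<le> r2" "r2 \<le> -3/2" "1 \<le> r0" "r0 \<le> 3"
    "sextic r1 = 0" "sextic r2 = 0" "sextic r0 = 0"
proof -
  obtain r1 where "-114 \<le> r1" "r1 \<le> -113" "sextic r1 = 0"
    using IVT2'[of sextic "-113" 0 "-114", OF _ _ _ sx_cont] by (auto simp: sextic_def power_divide)
  moreover obtain r2 where "-2 \<le> r2" "r2 \<le> -3/2" "sextic r2 = 0"
    using IVT'[of sextic "-2" 0 "-3/2", OF _ _ _ sx_cont] by (auto simp: sextic_def power_divide)
  moreover obtain r0 where "1 \<le> r0" "r0 \<le> 3" "sextic r0 = 0"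
    using IVT2'[of sextic 3 0 1, OF _ _ _ sx_cont] by (auto simp: sextic_def)
  ultimately show ?thesis using that by blast
qed

lemma theta_star_props:
  "1 < theta_star \<and> theta_star < 3 \<and>
   (\<forall>x. 1 \<le> x \<and> x \<le> theta_star \<longrightarrow> 0 \<le> sextic x) \<and>
   (\<forall>x. theta_star \<le> x \<and> x \<le> 3 \<longrightarrow> sextic x \<le> 0)"
proof -
  obtain r1 r2 r0 where r: "-114 \<le> r1" "r1 \<le> -113" "-2 \<le> r2" "r2 \<le> -3/2" "1 \<le> r0" "r0 \<le> 3"
    "sextic r1 = 0" "sextic r2 = 0" "sextic r0 = 0" by (rule sx_roots)
  have "sextic 1 \<noteq> 0" "sextic 3 \<noteq> 0" by (simp_all add: sextic_def)
  then have r0lo: "1 < r0" and r0hi: "r0 < 3" using r by (metis order_le_less)+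
  have roots_below: "x = r1 \<or> x = r2" if "sextic x = 0" "x < r0" for x
  proof -
    consider "x \<le> -100" | "-100 \<le> x \<and> x \<le> -2" | "-2 \<le> x \<and> x \<le> -3/2" | "-3/2 \<le> x \<and> x \<le> 1"
      | "1 \<le> x" by linarith
    then show ?thesis
    proof cases
      case 1
      then show ?thesis using sx_decfar[of x r1] sx_decfar[of r1 x] r that
        by (cases x r1 rule: linorder_cases) auto
    next
      case 2 then show ?thesis using sx_negm[of x] that by auto
    next
      case 3
      then show ?thesis using sx_inc2[of x r2] sx_inc2[of r2 x] r that
        by (cases x r2 rule: linorder_cases) auto
    next
      case 4 then show ?thesis using sx_posm[of x] that by auto
    next
      case 5 then show ?thesis using sx_dec13[of x r0] r that by auto
    qed
  qed
  have r12: "r1 < r2" "r2 < r0" using r by auto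
  have P0: "sextic r0 = 0 \<and> card {x. sextic x = 0 \<and> x < r0} = 2"
  proof -
    have "{x. sextic x = 0 \<and> x < r0} = {r1, r2}" using roots_below r r12 by auto
    then show ?thesis using r12 r by auto
  qed
  have ts: "theta_star = r0"
    unfolding theta_star_def
  proof (rule the_equality)
    show "sextic r0 = 0 \<and> card {x. sextic x = 0 \<and> x < r0} = 2" by (rule P0)
  next
    fix r assume H: "sextic r = 0 \<and> card {x. sextic x = 0 \<and> x < r} = 2"
    show "r = r0"
    proof (rule ccontr)
      assume ne: "r \<noteq> r0"
      show False
      proof (cases "r < r0")
        case True
        then have "r = r1 \<or> r = r2" using roots_below H by auto
        then show False
        proof
          assume "r = r1"
          then have "{x. sextic x = 0 \<and> x < r} = {}" using roots_below r12 by force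
          then show False using H by (metis card.empty zero_neq_numeral)
        next
          assume "r = r2"
          then have "{x. sextic x = 0 \<and> x < r} = {r1}" using roots_below r12 r by force
          then show False using H by simp
        qed
      next
        case False
        then have lt: "r0 < r" using ne by auto
        have sub: "{r1, r2, r0} \<subseteq> {x. sextic x = 0 \<and> x < r}" using r r12 lt by auto
        show False
        proof (cases "finite {x. sextic x = 0 \<and> x < r}")
          case True
          have "card {r1, r2, r0} \<le> card {x. sextic x = 0 \<and> x < r}"
            by (rule card_mono[OF True sub])
          moreover have "card {r1, r2, r0} = 3" using r12 by auto
          ultimately show False using H by simp
        next
          case False then show False using H by simp
        qed
      qed
    qed
  qed
  show ?thesis
    unfolding ts using r0lo r0hi sx_dec13 \<open>sextic r0 = 0\<close>
    by (smt (verit))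
qed
lemma diff_nonneg_le: "(a::real) - b = c \<Longrightarrow> 0 \<le> c \<Longrightarrow> b \<le> a" by simp

lemma amgm3:
  fixes x y z :: real
  assumes "0 \<le> x" "0 \<le> y" "0 \<le> z"
  shows "27*(x*y*z) \<le> (x+y+z)^3"
proof -
  have "(y+z)^2 - 4*(y*z) = (y-z)^2" by algebra
  then have 0: "4*(y*z) \<le> (y+z)^2" by (rule diff_nonneg_le) simp
  have 1: "x*(4*(y*z)) \<le> x*(y+z)^2" using 0 assms(1) by (rule mult_left_mono)
  have "(x+y+z)^3 - 27*(x*(y+z)^2/4) = (2*x-(y+z))^2*(x+4*(y+z))/4" by (simp add: field_simps) algebra
  moreover have "0 \<le> (2*x-(y+z))^2*(x+4*(y+z))/4" using assms by simp
  ultimately have "27*(x*(y+z)^2/4) \<le> (x+y+z)^3" by (rule diff_nonneg_le)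
  then show ?thesis using 1 by simp
qed

lemma e2bound:
  fixes x y z :: real
  shows "3*(x*y + x*z + y*z) \<le> (x+y+z)^2"
proof (rule diff_nonneg_le)
  show "(x+y+z)^2 - 3*(x*y + x*z + y*z) = ((x-y)^2+(y-z)^2+(z-x)^2)/2" by (simp add: field_simps) algebra
qed simp

lemma prod2bound:
  fixes x y :: real
  shows "4*(x*y) \<le> (x+y)^2"
proof (rule diff_nonneg_le)
  show "(x+y)^2 - 4*(x*y) = (x-y)^2" by algebra
qed simp

lemma M1:
  fixes s q :: real
  assumes "s < 9" "0 \<le> q"
  shows "(9-s)^2 * (s*q^3 + 3*q^2*(1-3*q)) \<le> 4"
proof (rule diff_nonneg_le)
  show "4 - (9-s)^2 * (s*q^3 + 3*q^2*(1-3*q)) = ((9-s)*q-2)^2*((9-s)*q+1)" by algebra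
  show "0 \<le> ((9-s)*q-2)^2*((9-s)*q+1)" using assms by simp
qed

lemma M1b:
  fixes s q :: real
  assumes "3 \<le> s" "0 \<le> q" "q \<le> 1/3"
  shows "27*(s*q^3 + 3*q^2*(1-3*q)) \<le> s"
proof (rule diff_nonneg_le)
  show "s - 27*(s*q^3 + 3*q^2*(1-3*q)) = (1-3*q)*((s-3)*(1+3*q+9*q^2) + 3*(1+6*q)*(1-3*q))"
    by algebra
  show "0 \<le> (1-3*q)*((s-3)*(1+3*q+9*q^2) + 3*(1+6*q)*(1-3*q))"
    using assms by (intro mult_nonneg_nonneg add_nonneg_nonneg) auto
qed

lemma M3:
  fixes t q :: real
  assumes "1 \<le> t" "0 \<le> q"
  shows "(9*t-1)^2 * (q^3 + 3*t*q^2*(1-3*q)) \<le> 4*t^3"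
proof (rule diff_nonneg_le)
  show "4*t^3 - (9*t-1)^2 * (q^3 + 3*t*q^2*(1-3*q)) = ((9*t-1)*q-2*t)^2*((9*t-1)*q+t)" by algebra
  show "0 \<le> ((9*t-1)*q-2*t)^2*((9*t-1)*q+t)" using assms by simp
qed
lemma type1:
  fixes p1 p2 p3 p4 K \<theta> S :: real
  assumes nn: "0 \<le> p1" "0 \<le> p2" "0 \<le> p3" "0 \<le> p4" and sm: "p1+p2+p3+p4 = 1"
    and K: "0 \<le> K" and th: "0 \<le> \<theta>"
    and C: "\<And>q. 0 \<le> q \<Longrightarrow> q \<le> 1/3 \<Longrightarrow> K*(\<theta>*q^3 + 3*q^2*(1-3*q)) \<le> S"
  shows "K*(\<theta>*(p2*p3*p4) + p1*(p2*p3+p2*p4+p3*p4)) \<le> S"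
proof -
  define q where "q = (p2+p3+p4)/3"
  have q3: "3*q = p2+p3+p4" unfolding q_def by simp
  have q0: "0 \<le> q" "q \<le> 1/3" using nn sm unfolding q_def by auto
  have p1: "p1 = 1 - 3*q" using sm q3 by linarith
  have a: "27*(p2*p3*p4) \<le> (3*q)^3" unfolding q3 by (rule amgm3[OF nn(2-4)])
  have b: "3*(p2*p3+p2*p4+p3*p4) \<le> (3*q)^2" unfolding q3 by (rule e2bound)
  have a': "p2*p3*p4 \<le> q^3" using a by (simp add: power3_eq_cube)
  have b': "p2*p3+p2*p4+p3*p4 \<le> 3*q^2" using b by (simp add: power2_eq_square)
  have "\<theta>*(p2*p3*p4) + p1*(p2*p3+p2*p4+p3*p4) \<le> \<theta>*q^3 + p1*(3*q^2)"
    using mult_left_mono[OF a' th] mult_left_mono[OF b' nn(1)] by linarith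
  also have "\<dots> = \<theta>*q^3 + 3*q^2*(1-3*q)" using p1 by simp
  finally have "K*(\<theta>*(p2*p3*p4) + p1*(p2*p3+p2*p4+p3*p4)) \<le> K*(\<theta>*q^3 + 3*q^2*(1-3*q))"
    using K by (rule mult_left_mono)
  also have "\<dots> \<le> S" using C q0 by blast
  finally show ?thesis .
qed

lemma type3:
  fixes p1 p2 p3 p4 K \<theta> S :: real
  assumes nn: "0 \<le> p1" "0 \<le> p2" "0 \<le> p3" "0 \<le> p4" and sm: "p1+p2+p3+p4 = 1"
    and K: "0 \<le> K" and th: "0 \<le> \<theta>"
    and C: "\<And>q. 0 \<le> q \<Longrightarrow> q \<le> 1/3 \<Longrightarrow> K*(q^3 + 3*\<theta>*q^2*(1-3*q)) \<le> S"
  shows "K*((p2*p3*p4) + \<theta>*(p1*(p2*p3+p2*p4+p3*p4))) \<le> S"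
proof -
  define q where "q = (p2+p3+p4)/3"
  have q3: "3*q = p2+p3+p4" unfolding q_def by simp
  have q0: "0 \<le> q" "q \<le> 1/3" using nn sm unfolding q_def by auto
  have p1: "p1 = 1 - 3*q" using sm q3 by linarith
  have a: "27*(p2*p3*p4) \<le> (3*q)^3" unfolding q3 by (rule amgm3[OF nn(2-4)])
  have b: "3*(p2*p3+p2*p4+p3*p4) \<le> (3*q)^2" unfolding q3 by (rule e2bound)
  have a': "p2*p3*p4 \<le> q^3" using a by (simp add: power3_eq_cube)
  have b': "p2*p3+p2*p4+p3*p4 \<le> 3*q^2" using b by (simp add: power2_eq_square)
  have c: "p1*(p2*p3+p2*p4+p3*p4) \<le> p1*(3*q^2)" using mult_left_mono[OF b' nn(1)] .
  have "(p2*p3*p4) + \<theta>*(p1*(p2*p3+p2*p4+p3*p4)) \<le> q^3 + \<theta>*(p1*(3*q^2))"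
    using a' mult_left_mono[OF c th] by linarith
  also have "\<dots> = q^3 + 3*\<theta>*q^2*(1-3*q)" using p1 by simp
  finally have "K*((p2*p3*p4) + \<theta>*(p1*(p2*p3+p2*p4+p3*p4))) \<le> K*(q^3 + 3*\<theta>*q^2*(1-3*q))"
    using K by (rule mult_left_mono)
  also have "\<dots> \<le> S" using C q0 by blast
  finally show ?thesis .
qed

lemma type2:
  fixes p1 p2 p3 p4 K \<theta> S :: real
  assumes nn: "0 \<le> p1" "0 \<le> p2" "0 \<le> p3" "0 \<le> p4" and sm: "p1+p2+p3+p4 = 1"
    and K: "0 \<le> K" and th: "0 \<le> \<theta>"
    and C: "\<And>y. 0 \<le> y \<Longrightarrow> y \<le> 1 \<Longrightarrow> K*(y*(1-y)*(\<theta>*y+1-y)/4) \<le> S"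
  shows "K*(\<theta>*((p1+p2)*(p3*p4)) + (p3+p4)*(p1*p2)) \<le> S"
proof -
  define y where "y = p3+p4"
  have y0: "0 \<le> y" "y \<le> 1" using nn sm unfolding y_def by auto
  have x: "p1+p2 = 1-y" using sm unfolding y_def by simp
  have a: "4*(p3*p4) \<le> y^2" using prod2bound[of p3 p4] unfolding y_def .
  have b: "4*(p1*p2) \<le> (1-y)^2" using prod2bound[of p1 p2] x by simp
  have "0 \<le> \<theta>*(1-y)" using th y0 by simp
  from mult_left_mono[OF a this] have a': "4*(\<theta>*((1-y)*(p3*p4))) \<le> \<theta>*(1-y)*y^2" by (simp add: algebra_simps)
  from mult_left_mono[OF b y0(1)] have b': "4*(y*(p1*p2)) \<le> y*(1-y)^2" by (simp add: algebra_simps)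
  define A where "A = \<theta>*((1-y)*(p3*p4))"
  define B where "B = y*(p1*p2)"
  have "4*(A+B) = 4*A + 4*B" by (simp add: distrib_left)
  also have "\<dots> \<le> \<theta>*(1-y)*y^2 + y*(1-y)^2"
    unfolding A_def B_def by (rule add_mono[OF a' b'])
  also have "\<dots> = 4*(y*(1-y)*(\<theta>*y+1-y)/4)" by (simp add: algebra_simps power2_eq_square)
  finally have "4*(A+B) \<le> 4*(y*(1-y)*(\<theta>*y+1-y)/4)" .
  then have "A + B \<le> y*(1-y)*(\<theta>*y+1-y)/4" by (rule mult_left_le_imp_le) simp
  then have "\<theta>*((1-y)*(p3*p4)) + y*(p1*p2) \<le> y*(1-y)*(\<theta>*y+1-y)/4" unfolding A_def B_def .
  then have "\<theta>*((p1+p2)*(p3*p4)) + (p3+p4)*(p1*p2) \<le> y*(1-y)*(\<theta>*y+1-y)/4"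
    unfolding x y_def[symmetric] .
  then have "K*(\<theta>*((p1+p2)*(p3*p4)) + (p3+p4)*(p1*p2)) \<le> K*(y*(1-y)*(\<theta>*y+1-y)/4)"
    using K by (rule mult_left_mono)
  also have "\<dots> \<le> S" using C y0 by blast
  finally show ?thesis .
qed
lemma corner:
  fixes a \<theta> K p1 p2 p3 p4 v1 v2 v3 v4 :: real
  assumes apos: "0 < a" and th: "1 \<le> \<theta>" and K: "0 \<le> K" and C0: "K \<le> 64"
    and C1: "\<And>q. 0 \<le> q \<Longrightarrow> q \<le> 1/3 \<Longrightarrow> K*(\<theta>*q^3 + 3*q^2*(1-3*q)) \<le> \<theta>+3"
    and C3: "\<And>q. 0 \<le> q \<Longrightarrow> q \<le> 1/3 \<Longrightarrow> K*(q^3 + 3*\<theta>*q^2*(1-3*q)) \<le> 3*\<theta>+1"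
    and C2: "\<And>y. 0 \<le> y \<Longrightarrow> y \<le> 1 \<Longrightarrow> K*(y*(1-y)*(\<theta>*y+1-y)/4) \<le> 2*\<theta>+2"
    and nn: "0 \<le> p1" "0 \<le> p2" "0 \<le> p3" "0 \<le> p4" and sm: "p1+p2+p3+p4 = 1"
    and v: "v1 = a \<or> v1 = \<theta>*a" "v2 = a \<or> v2 = \<theta>*a" "v3 = a \<or> v3 = \<theta>*a" "v4 = a \<or> v4 = \<theta>*a"
  shows "K*Lv (v1,v2,v3,v4) (p1,p2,p3,p4) \<le> v1+v2+v3+v4"
proof -
  have th0: "0 \<le> \<theta>" using th by simp
  have T1: "\<And>x1 x2 x3 x4. 0 \<le> x1 \<Longrightarrow> 0 \<le> x2 \<Longrightarrow> 0 \<le> x3 \<Longrightarrow> 0 \<le> x4 \<Longrightarrow> x1+x2+x3+x4 = 1 \<Longrightarrow>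
     K*(\<theta>*(x2*x3*x4) + x1*(x2*x3+x2*x4+x3*x4)) \<le> \<theta>+3"
    by (rule type1[OF _ _ _ _ _ K th0 C1])
  have T3: "\<And>x1 x2 x3 x4. 0 \<le> x1 \<Longrightarrow> 0 \<le> x2 \<Longrightarrow> 0 \<le> x3 \<Longrightarrow> 0 \<le> x4 \<Longrightarrow> x1+x2+x3+x4 = 1 \<Longrightarrow>
     K*((x2*x3*x4) + \<theta>*(x1*(x2*x3+x2*x4+x3*x4))) \<le> 3*\<theta>+1"
    by (rule type3[OF _ _ _ _ _ K th0 C3])
  have T2: "\<And>x1 x2 x3 x4. 0 \<le> x1 \<Longrightarrow> 0 \<le> x2 \<Longrightarrow> 0 \<le> x3 \<Longrightarrow> 0 \<le> x4 \<Longrightarrow> x1+x2+x3+x4 = 1 \<Longrightarrow>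
     K*(\<theta>*((x1+x2)*(x3*x4)) + (x3+x4)*(x1*x2)) \<le> 2*\<theta>+2"
    by (rule type2[OF _ _ _ _ _ K th0 C2])
  have T0: "\<And>x1 x2 x3 x4. 0 \<le> x1 \<Longrightarrow> 0 \<le> x2 \<Longrightarrow> 0 \<le> x3 \<Longrightarrow> 0 \<le> x4 \<Longrightarrow> x1+x2+x3+x4 = 1 \<Longrightarrow>
     K*(x2*x3*x4 + x1*(x2*x3+x2*x4+x3*x4)) \<le> 4"
  proof -
    fix x1 x2 x3 x4 :: real
    assume xs: "0 \<le> x1" "0 \<le> x2" "0 \<le> x3" "0 \<le> x4" "x1+x2+x3+x4 = 1"
    have "64*(1*(x2*x3*x4) + x1*(x2*x3+x2*x4+x3*x4)) \<le> 1+3"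
      by (rule type1[OF xs]) (use M1[of 1] in auto)
    moreover have "0 \<le> x2*x3*x4 + x1*(x2*x3+x2*x4+x3*x4)" using xs by simp
    ultimately show "K*(x2*x3*x4 + x1*(x2*x3+x2*x4+x3*x4)) \<le> 4"
      using mult_right_mono[OF C0, of "x2*x3*x4 + x1*(x2*x3+x2*x4+x3*x4)"] by simp
  qed
  have cr0000: "v1 = a \<Longrightarrow> v2 = a \<Longrightarrow> v3 = a \<Longrightarrow> v4 = a \<Longrightarrow> K*Lv (v1,v2,v3,v4) (p1,p2,p3,p4) \<le> v1+v2+v3+v4"
  proof -
    assume h: "v1 = a" "v2 = a" "v3 = a" "v4 = a"
    have e1: "K*Lv (v1,v2,v3,v4) (p1,p2,p3,p4) = a*(K*(p2*p3*p4 + p1*(p2*p3+p2*p4+p3*p4)))" unfolding h Lv_def by (simp add: algebra_simps)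
    have e2: "v1+v2+v3+v4 = a*(4)" unfolding h by (simp add: algebra_simps)
    have "K*(p2*p3*p4 + p1*(p2*p3+p2*p4+p3*p4)) \<le> 4" by (rule T0) (use nn sm in linarith)+
    then show ?thesis unfolding e1 e2 using apos th by (intro mult_left_mono) auto
  qed
  have cr0001: "v1 = a \<Longrightarrow> v2 = a \<Longrightarrow> v3 = a \<Longrightarrow> v4 = (\<theta>*a) \<Longrightarrow> K*Lv (v1,v2,v3,v4) (p1,p2,p3,p4) \<le> v1+v2+v3+v4"
  proof -
    assume h: "v1 = a" "v2 = a" "v3 = a" "v4 = (\<theta>*a)"
    have e1: "K*Lv (v1,v2,v3,v4) (p1,p2,p3,p4) = a*(K*(\<theta>*(p1*p2*p3) + p4*(p1*p2+p1*p3+p2*p3)))" unfolding h Lv_def by (simp add: algebra_simps)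
    have e2: "v1+v2+v3+v4 = a*(\<theta>+3)" unfolding h by (simp add: algebra_simps)
    have "K*(\<theta>*(p1*p2*p3) + p4*(p1*p2+p1*p3+p2*p3)) \<le> \<theta>+3" by (rule T1) (use nn sm in linarith)+
    then show ?thesis unfolding e1 e2 using apos th by (intro mult_left_mono) auto
  qed
  have cr0010: "v1 = a \<Longrightarrow> v2 = a \<Longrightarrow> v3 = (\<theta>*a) \<Longrightarrow> v4 = a \<Longrightarrow> K*Lv (v1,v2,v3,v4) (p1,p2,p3,p4) \<le> v1+v2+v3+v4"
  proof -
    assume h: "v1 = a" "v2 = a" "v3 = (\<theta>*a)" "v4 = a"
    have e1: "K*Lv (v1,v2,v3,v4) (p1,p2,p3,p4) = a*(K*(\<theta>*(p1*p2*p4) + p3*(p1*p2+p1*p4+p2*p4)))" unfolding h Lv_def by (simp add: algebra_simps)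
    have e2: "v1+v2+v3+v4 = a*(\<theta>+3)" unfolding h by (simp add: algebra_simps)
    have "K*(\<theta>*(p1*p2*p4) + p3*(p1*p2+p1*p4+p2*p4)) \<le> \<theta>+3" by (rule T1) (use nn sm in linarith)+
    then show ?thesis unfolding e1 e2 using apos th by (intro mult_left_mono) auto
  qed
  have cr0011: "v1 = a \<Longrightarrow> v2 = a \<Longrightarrow> v3 = (\<theta>*a) \<Longrightarrow> v4 = (\<theta>*a) \<Longrightarrow> K*Lv (v1,v2,v3,v4) (p1,p2,p3,p4) \<le> v1+v2+v3+v4"
  proof -
    assume h: "v1 = a" "v2 = a" "v3 = (\<theta>*a)" "v4 = (\<theta>*a)"
    have e1: "K*Lv (v1,v2,v3,v4) (p1,p2,p3,p4) = a*(K*(\<theta>*((p3+p4)*(p1*p2)) + (p1+p2)*(p3*p4)))" unfolding h Lv_def by (simp add: algebra_simps)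
    have e2: "v1+v2+v3+v4 = a*(2*\<theta>+2)" unfolding h by (simp add: algebra_simps)
    have "K*(\<theta>*((p3+p4)*(p1*p2)) + (p1+p2)*(p3*p4)) \<le> 2*\<theta>+2" by (rule T2) (use nn sm in linarith)+
    then show ?thesis unfolding e1 e2 using apos th by (intro mult_left_mono) auto
  qed
  have cr0100: "v1 = a \<Longrightarrow> v2 = (\<theta>*a) \<Longrightarrow> v3 = a \<Longrightarrow> v4 = a \<Longrightarrow> K*Lv (v1,v2,v3,v4) (p1,p2,p3,p4) \<le> v1+v2+v3+v4"
  proof -
    assume h: "v1 = a" "v2 = (\<theta>*a)" "v3 = a" "v4 = a"
    have e1: "K*Lv (v1,v2,v3,v4) (p1,p2,p3,p4) = a*(K*(\<theta>*(p1*p3*p4) + p2*(p1*p3+p1*p4+p3*p4)))" unfolding h Lv_def by (simp add: algebra_simps)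
    have e2: "v1+v2+v3+v4 = a*(\<theta>+3)" unfolding h by (simp add: algebra_simps)
    have "K*(\<theta>*(p1*p3*p4) + p2*(p1*p3+p1*p4+p3*p4)) \<le> \<theta>+3" by (rule T1) (use nn sm in linarith)+
    then show ?thesis unfolding e1 e2 using apos th by (intro mult_left_mono) auto
  qed
  have cr0101: "v1 = a \<Longrightarrow> v2 = (\<theta>*a) \<Longrightarrow> v3 = a \<Longrightarrow> v4 = (\<theta>*a) \<Longrightarrow> K*Lv (v1,v2,v3,v4) (p1,p2,p3,p4) \<le> v1+v2+v3+v4"
  proof -
    assume h: "v1 = a" "v2 = (\<theta>*a)" "v3 = a" "v4 = (\<theta>*a)"
    have e1: "K*Lv (v1,v2,v3,v4) (p1,p2,p3,p4) = a*(K*(\<theta>*((p2+p4)*(p1*p3)) + (p1+p3)*(p2*p4)))" unfolding h Lv_def by (simp add: algebra_simps)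
    have e2: "v1+v2+v3+v4 = a*(2*\<theta>+2)" unfolding h by (simp add: algebra_simps)
    have "K*(\<theta>*((p2+p4)*(p1*p3)) + (p1+p3)*(p2*p4)) \<le> 2*\<theta>+2" by (rule T2) (use nn sm in linarith)+
    then show ?thesis unfolding e1 e2 using apos th by (intro mult_left_mono) auto
  qed
  have cr0110: "v1 = a \<Longrightarrow> v2 = (\<theta>*a) \<Longrightarrow> v3 = (\<theta>*a) \<Longrightarrow> v4 = a \<Longrightarrow> K*Lv (v1,v2,v3,v4) (p1,p2,p3,p4) \<le> v1+v2+v3+v4"
  proof -
    assume h: "v1 = a" "v2 = (\<theta>*a)" "v3 = (\<theta>*a)" "v4 = a"
    have e1: "K*Lv (v1,v2,v3,v4) (p1,p2,p3,p4) = a*(K*(\<theta>*((p2+p3)*(p1*p4)) + (p1+p4)*(p2*p3)))" unfolding h Lv_def by (simp add: algebra_simps)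
    have e2: "v1+v2+v3+v4 = a*(2*\<theta>+2)" unfolding h by (simp add: algebra_simps)
    have "K*(\<theta>*((p2+p3)*(p1*p4)) + (p1+p4)*(p2*p3)) \<le> 2*\<theta>+2" by (rule T2) (use nn sm in linarith)+
    then show ?thesis unfolding e1 e2 using apos th by (intro mult_left_mono) auto
  qed
  have cr0111: "v1 = a \<Longrightarrow> v2 = (\<theta>*a) \<Longrightarrow> v3 = (\<theta>*a) \<Longrightarrow> v4 = (\<theta>*a) \<Longrightarrow> K*Lv (v1,v2,v3,v4) (p1,p2,p3,p4) \<le> v1+v2+v3+v4"
  proof -
    assume h: "v1 = a" "v2 = (\<theta>*a)" "v3 = (\<theta>*a)" "v4 = (\<theta>*a)"
    have e1: "K*Lv (v1,v2,v3,v4) (p1,p2,p3,p4) = a*(K*((p2*p3*p4) + \<theta>*(p1*(p2*p3+p2*p4+p3*p4))))" unfolding h Lv_def by (simp add: algebra_simps)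
    have e2: "v1+v2+v3+v4 = a*(3*\<theta>+1)" unfolding h by (simp add: algebra_simps)
    have "K*((p2*p3*p4) + \<theta>*(p1*(p2*p3+p2*p4+p3*p4))) \<le> 3*\<theta>+1" by (rule T3) (use nn sm in linarith)+
    then show ?thesis unfolding e1 e2 using apos th by (intro mult_left_mono) auto
  qed
  have cr1000: "v1 = (\<theta>*a) \<Longrightarrow> v2 = a \<Longrightarrow> v3 = a \<Longrightarrow> v4 = a \<Longrightarrow> K*Lv (v1,v2,v3,v4) (p1,p2,p3,p4) \<le> v1+v2+v3+v4"
  proof -
    assume h: "v1 = (\<theta>*a)" "v2 = a" "v3 = a" "v4 = a"
    have e1: "K*Lv (v1,v2,v3,v4) (p1,p2,p3,p4) = a*(K*(\<theta>*(p2*p3*p4) + p1*(p2*p3+p2*p4+p3*p4)))" unfolding h Lv_def by (simp add: algebra_simps)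
    have e2: "v1+v2+v3+v4 = a*(\<theta>+3)" unfolding h by (simp add: algebra_simps)
    have "K*(\<theta>*(p2*p3*p4) + p1*(p2*p3+p2*p4+p3*p4)) \<le> \<theta>+3" by (rule T1) (use nn sm in linarith)+
    then show ?thesis unfolding e1 e2 using apos th by (intro mult_left_mono) auto
  qed
  have cr1001: "v1 = (\<theta>*a) \<Longrightarrow> v2 = a \<Longrightarrow> v3 = a \<Longrightarrow> v4 = (\<theta>*a) \<Longrightarrow> K*Lv (v1,v2,v3,v4) (p1,p2,p3,p4) \<le> v1+v2+v3+v4"
  proof -
    assume h: "v1 = (\<theta>*a)" "v2 = a" "v3 = a" "v4 = (\<theta>*a)"
    have e1: "K*Lv (v1,v2,v3,v4) (p1,p2,p3,p4) = a*(K*(\<theta>*((p1+p4)*(p2*p3)) + (p2+p3)*(p1*p4)))" unfolding h Lv_def by (simp add: algebra_simps)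
    have e2: "v1+v2+v3+v4 = a*(2*\<theta>+2)" unfolding h by (simp add: algebra_simps)
    have "K*(\<theta>*((p1+p4)*(p2*p3)) + (p2+p3)*(p1*p4)) \<le> 2*\<theta>+2" by (rule T2) (use nn sm in linarith)+
    then show ?thesis unfolding e1 e2 using apos th by (intro mult_left_mono) auto
  qed
  have cr1010: "v1 = (\<theta>*a) \<Longrightarrow> v2 = a \<Longrightarrow> v3 = (\<theta>*a) \<Longrightarrow> v4 = a \<Longrightarrow> K*Lv (v1,v2,v3,v4) (p1,p2,p3,p4) \<le> v1+v2+v3+v4"
  proof -
    assume h: "v1 = (\<theta>*a)" "v2 = a" "v3 = (\<theta>*a)" "v4 = a"
    have e1: "K*Lv (v1,v2,v3,v4) (p1,p2,p3,p4) = a*(K*(\<theta>*((p1+p3)*(p2*p4)) + (p2+p4)*(p1*p3)))" unfolding h Lv_def by (simp add: algebra_simps)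
    have e2: "v1+v2+v3+v4 = a*(2*\<theta>+2)" unfolding h by (simp add: algebra_simps)
    have "K*(\<theta>*((p1+p3)*(p2*p4)) + (p2+p4)*(p1*p3)) \<le> 2*\<theta>+2" by (rule T2) (use nn sm in linarith)+
    then show ?thesis unfolding e1 e2 using apos th by (intro mult_left_mono) auto
  qed
  have cr1011: "v1 = (\<theta>*a) \<Longrightarrow> v2 = a \<Longrightarrow> v3 = (\<theta>*a) \<Longrightarrow> v4 = (\<theta>*a) \<Longrightarrow> K*Lv (v1,v2,v3,v4) (p1,p2,p3,p4) \<le> v1+v2+v3+v4"
  proof -
    assume h: "v1 = (\<theta>*a)" "v2 = a" "v3 = (\<theta>*a)" "v4 = (\<theta>*a)"
    have e1: "K*Lv (v1,v2,v3,v4) (p1,p2,p3,p4) = a*(K*((p1*p3*p4) + \<theta>*(p2*(p1*p3+p1*p4+p3*p4))))" unfolding h Lv_def by (simp add: algebra_simps)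
    have e2: "v1+v2+v3+v4 = a*(3*\<theta>+1)" unfolding h by (simp add: algebra_simps)
    have "K*((p1*p3*p4) + \<theta>*(p2*(p1*p3+p1*p4+p3*p4))) \<le> 3*\<theta>+1" by (rule T3) (use nn sm in linarith)+
    then show ?thesis unfolding e1 e2 using apos th by (intro mult_left_mono) auto
  qed
  have cr1100: "v1 = (\<theta>*a) \<Longrightarrow> v2 = (\<theta>*a) \<Longrightarrow> v3 = a \<Longrightarrow> v4 = a \<Longrightarrow> K*Lv (v1,v2,v3,v4) (p1,p2,p3,p4) \<le> v1+v2+v3+v4"
  proof -
    assume h: "v1 = (\<theta>*a)" "v2 = (\<theta>*a)" "v3 = a" "v4 = a"
    have e1: "K*Lv (v1,v2,v3,v4) (p1,p2,p3,p4) = a*(K*(\<theta>*((p1+p2)*(p3*p4)) + (p3+p4)*(p1*p2)))" unfolding h Lv_def by (simp add: algebra_simps)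
    have e2: "v1+v2+v3+v4 = a*(2*\<theta>+2)" unfolding h by (simp add: algebra_simps)
    have "K*(\<theta>*((p1+p2)*(p3*p4)) + (p3+p4)*(p1*p2)) \<le> 2*\<theta>+2" by (rule T2) (use nn sm in linarith)+
    then show ?thesis unfolding e1 e2 using apos th by (intro mult_left_mono) auto
  qed
  have cr1101: "v1 = (\<theta>*a) \<Longrightarrow> v2 = (\<theta>*a) \<Longrightarrow> v3 = a \<Longrightarrow> v4 = (\<theta>*a) \<Longrightarrow> K*Lv (v1,v2,v3,v4) (p1,p2,p3,p4) \<le> v1+v2+v3+v4"
  proof -
    assume h: "v1 = (\<theta>*a)" "v2 = (\<theta>*a)" "v3 = a" "v4 = (\<theta>*a)"
    have e1: "K*Lv (v1,v2,v3,v4) (p1,p2,p3,p4) = a*(K*((p1*p2*p4) + \<theta>*(p3*(p1*p2+p1*p4+p2*p4))))" unfolding h Lv_def by (simp add: algebra_simps)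
    have e2: "v1+v2+v3+v4 = a*(3*\<theta>+1)" unfolding h by (simp add: algebra_simps)
    have "K*((p1*p2*p4) + \<theta>*(p3*(p1*p2+p1*p4+p2*p4))) \<le> 3*\<theta>+1" by (rule T3) (use nn sm in linarith)+
    then show ?thesis unfolding e1 e2 using apos th by (intro mult_left_mono) auto
  qed
  have cr1110: "v1 = (\<theta>*a) \<Longrightarrow> v2 = (\<theta>*a) \<Longrightarrow> v3 = (\<theta>*a) \<Longrightarrow> v4 = a \<Longrightarrow> K*Lv (v1,v2,v3,v4) (p1,p2,p3,p4) \<le> v1+v2+v3+v4"
  proof -
    assume h: "v1 = (\<theta>*a)" "v2 = (\<theta>*a)" "v3 = (\<theta>*a)" "v4 = a"
    have e1: "K*Lv (v1,v2,v3,v4) (p1,p2,p3,p4) = a*(K*((p1*p2*p3) + \<theta>*(p4*(p1*p2+p1*p3+p2*p3))))" unfolding h Lv_def by (simp add: algebra_simps)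
    have e2: "v1+v2+v3+v4 = a*(3*\<theta>+1)" unfolding h by (simp add: algebra_simps)
    have "K*((p1*p2*p3) + \<theta>*(p4*(p1*p2+p1*p3+p2*p3))) \<le> 3*\<theta>+1" by (rule T3) (use nn sm in linarith)+
    then show ?thesis unfolding e1 e2 using apos th by (intro mult_left_mono) auto
  qed
  have cr1111: "v1 = (\<theta>*a) \<Longrightarrow> v2 = (\<theta>*a) \<Longrightarrow> v3 = (\<theta>*a) \<Longrightarrow> v4 = (\<theta>*a) \<Longrightarrow> K*Lv (v1,v2,v3,v4) (p1,p2,p3,p4) \<le> v1+v2+v3+v4"
  proof -
    assume h: "v1 = (\<theta>*a)" "v2 = (\<theta>*a)" "v3 = (\<theta>*a)" "v4 = (\<theta>*a)"
    have e1: "K*Lv (v1,v2,v3,v4) (p1,p2,p3,p4) = (\<theta>*a)*(K*(p2*p3*p4 + p1*(p2*p3+p2*p4+p3*p4)))" unfolding h Lv_def by (simp add: algebra_simps)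
    have e2: "v1+v2+v3+v4 = (\<theta>*a)*(4)" unfolding h by (simp add: algebra_simps)
    have "K*(p2*p3*p4 + p1*(p2*p3+p2*p4+p3*p4)) \<le> 4" by (rule T0) (use nn sm in linarith)+
    then show ?thesis unfolding e1 e2 using apos th by (intro mult_left_mono) auto
  qed
  from v(1) show ?thesis
  proof
    assume h1: "v1 = a"
    from v(2) show ?thesis
    proof
      assume h2: "v2 = a"
      from v(3) show ?thesis
      proof
        assume h3: "v3 = a"
        from v(4) show ?thesis
        proof
          assume h4: "v4 = a"
          show ?thesis by (rule cr0000[OF h1 h2 h3 h4])
        next
          assume h4: "v4 = \<theta>*a"
          show ?thesis by (rule cr0001[OF h1 h2 h3 h4])
        qed
      next
        assume h3: "v3 = \<theta>*a"
        from v(4) show ?thesis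
        proof
          assume h4: "v4 = a"
          show ?thesis by (rule cr0010[OF h1 h2 h3 h4])
        next
          assume h4: "v4 = \<theta>*a"
          show ?thesis by (rule cr0011[OF h1 h2 h3 h4])
        qed
      qed
    next
      assume h2: "v2 = \<theta>*a"
      from v(3) show ?thesis
      proof
        assume h3: "v3 = a"
        from v(4) show ?thesis
        proof
          assume h4: "v4 = a"
          show ?thesis by (rule cr0100[OF h1 h2 h3 h4])
        next
          assume h4: "v4 = \<theta>*a"
          show ?thesis by (rule cr0101[OF h1 h2 h3 h4])
        qed
      next
        assume h3: "v3 = \<theta>*a"
        from v(4) show ?thesis
        proof
          assume h4: "v4 = a"
          show ?thesis by (rule cr0110[OF h1 h2 h3 h4])
        next
          assume h4: "v4 = \<theta>*a"
          show ?thesis by (rule cr0111[OF h1 h2 h3 h4])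
        qed
      qed
    qed
  next
    assume h1: "v1 = \<theta>*a"
    from v(2) show ?thesis
    proof
      assume h2: "v2 = a"
      from v(3) show ?thesis
      proof
        assume h3: "v3 = a"
        from v(4) show ?thesis
        proof
          assume h4: "v4 = a"
          show ?thesis by (rule cr1000[OF h1 h2 h3 h4])
        next
          assume h4: "v4 = \<theta>*a"
          show ?thesis by (rule cr1001[OF h1 h2 h3 h4])
        qed
      next
        assume h3: "v3 = \<theta>*a"
        from v(4) show ?thesis
        proof
          assume h4: "v4 = a"
          show ?thesis by (rule cr1010[OF h1 h2 h3 h4])
        next
          assume h4: "v4 = \<theta>*a"
          show ?thesis by (rule cr1011[OF h1 h2 h3 h4])
        qed
      qed
    next
      assume h2: "v2 = \<theta>*a"
      from v(3) show ?thesis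
      proof
        assume h3: "v3 = a"
        from v(4) show ?thesis
        proof
          assume h4: "v4 = a"
          show ?thesis by (rule cr1100[OF h1 h2 h3 h4])
        next
          assume h4: "v4 = \<theta>*a"
          show ?thesis by (rule cr1101[OF h1 h2 h3 h4])
        qed
      next
        assume h3: "v3 = \<theta>*a"
        from v(4) show ?thesis
        proof
          assume h4: "v4 = a"
          show ?thesis by (rule cr1110[OF h1 h2 h3 h4])
        next
          assume h4: "v4 = \<theta>*a"
          show ?thesis by (rule cr1111[OF h1 h2 h3 h4])
        qed
      qed
    qed
  qed
qed
lemma pick:
  fixes a b z d :: real
  assumes "a \<le> z" "z \<le> b"
  obtains u where "u = a \<or> u = b" "z*d \<le> u*d"
proof (cases "0 \<le> d")
  case True
  then have "z*d \<le> b*d" using assms by (intro mult_right_mono) auto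
  then show ?thesis using that by blast
next
  case False
  then have "z*d \<le> a*d" using assms by (intro mult_right_mono_neg) auto
  then show ?thesis using that by blast
qed

lemma boxbound:
  fixes a \<theta> K p1 p2 p3 p4 v1 v2 v3 v4 :: real
  assumes apos: "0 < a" and th: "1 \<le> \<theta>" and K: "0 \<le> K" and C0: "K \<le> 64"
    and C1: "\<And>q. 0 \<le> q \<Longrightarrow> q \<le> 1/3 \<Longrightarrow> K*(\<theta>*q^3 + 3*q^2*(1-3*q)) \<le> \<theta>+3"
    and C3: "\<And>q. 0 \<le> q \<Longrightarrow> q \<le> 1/3 \<Longrightarrow> K*(q^3 + 3*\<theta>*q^2*(1-3*q)) \<le> 3*\<theta>+1"
    and C2: "\<And>y. 0 \<le> y \<Longrightarrow> y \<le> 1 \<Longrightarrow> K*(y*(1-y)*(\<theta>*y+1-y)/4) \<le> 2*\<theta>+2"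
    and nn: "0 \<le> p1" "0 \<le> p2" "0 \<le> p3" "0 \<le> p4" and sm: "p1+p2+p3+p4 = 1"
    and v: "a \<le> v1" "v1 \<le> \<theta>*a" "a \<le> v2" "v2 \<le> \<theta>*a" "a \<le> v3" "v3 \<le> \<theta>*a" "a \<le> v4" "v4 \<le> \<theta>*a"
  shows "K*Lv (v1,v2,v3,v4) (p1,p2,p3,p4) \<le> v1+v2+v3+v4"
proof -
  define c1 where "c1 = K*(p2*p3*p4) - 1"
  define c2 where "c2 = K*(p1*p3*p4) - 1"
  define c3 where "c3 = K*(p1*p2*p4) - 1"
  define c4 where "c4 = K*(p1*p2*p3) - 1"
  have lin: "\<And>x1 x2 x3 x4. K*Lv (x1,x2,x3,x4) (p1,p2,p3,p4) - (x1+x2+x3+x4) = x1*c1 + x2*c2 + x3*c3 + x4*c4"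
    unfolding Lv_def c1_def c2_def c3_def c4_def by (simp add: algebra_simps)
  obtain u1 where u1: "u1 = a \<or> u1 = \<theta>*a" "v1*c1 \<le> u1*c1" using pick[OF v(1,2)] by blast
  obtain u2 where u2: "u2 = a \<or> u2 = \<theta>*a" "v2*c2 \<le> u2*c2" using pick[OF v(3,4)] by blast
  obtain u3 where u3: "u3 = a \<or> u3 = \<theta>*a" "v3*c3 \<le> u3*c3" using pick[OF v(5,6)] by blast
  obtain u4 where u4: "u4 = a \<or> u4 = \<theta>*a" "v4*c4 \<le> u4*c4" using pick[OF v(7,8)] by blast
  have cu: "K*Lv (u1,u2,u3,u4) (p1,p2,p3,p4) \<le> u1+u2+u3+u4"
    by (rule corner[OF apos th K C0 C1 C3 C2 nn sm u1(1) u2(1) u3(1) u4(1)])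
  have "K*Lv (v1,v2,v3,v4) (p1,p2,p3,p4) - (v1+v2+v3+v4) \<le> K*Lv (u1,u2,u3,u4) (p1,p2,p3,p4) - (u1+u2+u3+u4)"
    unfolding lin using u1(2) u2(2) u3(2) u4(2) by linarith
  then show ?thesis using cu by linarith
qed
definition R1 :: "real \<Rightarrow> real" where "R1 t = (t+3)*(9-t)^2/4"
definition R3 :: "real \<Rightarrow> real" where "R3 t = (3*t+1)*(9*t-1)^2/(4*t^3)"
definition R2u :: "real \<Rightarrow> real" where "R2u u = 216*u^2*(u^2+2*u-2)/((2*u-1)^2*(u+1)^2)"

lemma g1_nonneg: "0 \<le> (t::real) \<Longrightarrow> 0 \<le> q \<Longrightarrow> q \<le> 1/3 \<Longrightarrow> 0 \<le> t*q^3 + 3*q^2*(1-3*q)"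
  by (intro add_nonneg_nonneg mult_nonneg_nonneg) auto

lemma g3_nonneg: "0 \<le> (t::real) \<Longrightarrow> 0 \<le> q \<Longrightarrow> q \<le> 1/3 \<Longrightarrow> 0 \<le> q^3 + 3*t*q^2*(1-3*q)"
  by (intro add_nonneg_nonneg mult_nonneg_nonneg) auto

lemma C1_from:
  fixes K t q :: real
  assumes "0 \<le> K" "K \<le> R1 t" "0 \<le> t" "t < 9" "0 \<le> q" "q \<le> 1/3"
  shows "K*(t*q^3 + 3*q^2*(1-3*q)) \<le> t+3"
proof -
  define g where "g = t*q^3 + 3*q^2*(1-3*q)"
  have g0: "0 \<le> g" unfolding g_def using assms by (intro g1_nonneg) auto
  have M: "(9-t)^2 * g \<le> 4" unfolding g_def using assms by (intro M1) auto
  have "K*g \<le> R1 t * g" using assms(2) g0 by (rule mult_right_mono)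
  also have "\<dots> = (t+3)/4 * ((9-t)^2 * g)" unfolding R1_def by simp
  also have "\<dots> \<le> (t+3)/4 * 4" using M assms by (intro mult_left_mono) auto
  finally show ?thesis unfolding g_def by simp
qed

lemma C3_from:
  fixes K t q :: real
  assumes "0 \<le> K" "K \<le> R3 t" "1 \<le> t" "0 \<le> q" "q \<le> 1/3"
  shows "K*(q^3 + 3*t*q^2*(1-3*q)) \<le> 3*t+1"
proof -
  define g where "g = q^3 + 3*t*q^2*(1-3*q)"
  have g0: "0 \<le> g" unfolding g_def using assms by (intro g3_nonneg) auto
  have M: "(9*t-1)^2 * g \<le> 4*t^3" unfolding g_def using assms by (intro M3) auto
  have t3: "0 < 4*t^3" using assms by simp
  have "K*g \<le> R3 t * g" using assms(2) g0 by (rule mult_right_mono)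
  also have "\<dots> = (3*t+1) * (((9*t-1)^2 * g) / (4*t^3))" unfolding R3_def by simp
  also have "\<dots> \<le> (3*t+1) * 1" using M assms t3 by (intro mult_left_mono) (auto simp: divide_le_eq)
  finally show ?thesis unfolding g_def by simp
qed

lemma upar:
  fixes t :: real
  assumes "1 < t"
  defines "r \<equiv> sqrt (t^2 - t + 1)"
  defines "u \<equiv> t + r"
  shows "2 < u" "t*(2*u-1) = u^2-1" "r*(2*u-1) = u^2-u+1"
    "(2*t-1-r)*(t-2+r)*(t+1+r)*(2*u-1) = (u-2)^2*(u+1)^2"
proof -
  have e: "t^2 - t + 1 = t*(t-1) + 1" by algebra
  have "0 \<le> t*(t-1)" using assms by simp
  then have pos': "0 < t^2 - t + 1" unfolding e by linarith
  then have pos: "0 \<le> t^2 - t + 1" by simp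
  have rpos: "0 < r" unfolding r_def using pos' by simp
  have r2: "r^2 = t^2 - t + 1" unfolding r_def by (rule real_sqrt_pow2[OF pos])
  have r0: "0 \<le> r" using rpos by simp
  show h: "t*(2*u-1) = u^2-1" unfolding u_def using r2 by algebra
  show "r*(2*u-1) = u^2-u+1" unfolding u_def using r2 by algebra
  show "2 < u"
  proof (cases "2 \<le> t")
    case True
    then show ?thesis using True rpos unfolding u_def by simp
  next
    case False
    have "(2-t)^2 < r^2" unfolding r2 using assms by (simp add: power2_eq_square algebra_simps)
    then have "2 - t < r" using r0 by (smt (verit) power_mono)
    then show ?thesis unfolding u_def by simp
  qed
  show "(2*t-1-r)*(t-2+r)*(t+1+r)*(2*u-1) = (u-2)^2*(u+1)^2"
    unfolding u_def using r2 by algebra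
qed
lemma C2_from:
  fixes K t y :: real
  assumes t1: "1 < t" and K0: "0 \<le> K" and KR: "K \<le> R2u (t + sqrt (t^2 - t + 1))"
    and y: "0 \<le> y" "y \<le> 1"
  shows "K*(y*(1-y)*(t*y+1-y)/4) \<le> 2*t+2"
proof -
  define u where "u = t + sqrt (t^2 - t + 1)"
  have u2: "2 < u" and h: "t*(2*u-1) = u^2-1" using upar[OF t1] unfolding u_def by auto
  define W where "W = y*(1-y)*(t*y+1-y)"
  have ty: "y \<le> t*y" using mult_right_mono[of 1 t y] t1 y by simp
  have W0: "0 \<le> W" unfolding W_def using y ty by (intro mult_nonneg_nonneg) auto
  have eW: "(2*u-1)*W = y*(1-y)*(2*u-1+u*(u-2)*y)" unfolding W_def using h by algebra
  have ident: "(2*u-1)^2*(u+1)^2 - 27*u^2*(y*(1-y)*(2*u-1+u*(u-2)*y)) = (3*u*y-(2*u-1))^2*(3*u*(u-2)*y+(u+1)^2)"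
    by algebra
  have "0 \<le> (3*u*y-(2*u-1))^2*(3*u*(u-2)*y+(u+1)^2)" using u2 y by (intro mult_nonneg_nonneg add_nonneg_nonneg) auto
  then have "27*u^2*(y*(1-y)*(2*u-1+u*(u-2)*y)) \<le> (2*u-1)^2*(u+1)^2" by (rule diff_nonneg_le[OF ident])
  then have "(2*u-1)*(27*u^2*W) \<le> (2*u-1)*((2*u-1)*(u+1)^2)" unfolding eW[symmetric] by (simp add: algebra_simps power2_eq_square)
  then have key: "27*u^2*W \<le> (2*u-1)*(u+1)^2" by (rule mult_left_le_imp_le) (use u2 in simp)
  have "2*2 \<le> u*u" using mult_mono[of 2 u 2 u] u2 by simp
  then have up: "0 \<le> 2*(u^2+2*u-2)" using u2 by (simp add: power2_eq_square)
  have den: "0 < (2*u-1)^2*(u+1)^2" using u2 by simp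
  have nz: "2*u-1 \<noteq> 0" "u*2-1 \<noteq> 0" "u+1 \<noteq> 0" "1+u \<noteq> 0" using u2 by auto
  have "K*(W/4) \<le> R2u u * (W/4)" using KR W0 unfolding u_def[symmetric] by (intro mult_right_mono) auto
  also have "\<dots> = 2*(u^2+2*u-2)*(27*u^2*W) / ((2*u-1)^2*(u+1)^2)" unfolding R2u_def using nz by (simp add: field_simps)
  also have "\<dots> \<le> 2*(u^2+2*u-2)*((2*u-1)*(u+1)^2) / ((2*u-1)^2*(u+1)^2)"
    by (intro divide_right_mono mult_left_mono key up) (use den in simp)
  also have "\<dots> = 2*(u^2+2*u-2)*((2*u-1)*(u+1)^2) / ((2*u-1)*((2*u-1)*(u+1)^2))"
    by (simp only: power2_eq_square mult.assoc)
  also have "\<dots> = 2*(u^2+2*u-2)/(2*u-1)"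
    by (rule nonzero_mult_divide_mult_cancel_right) (use nz in simp)
  also have "\<dots> = 2*t+2" using h nz by (simp add: field_simps power2_eq_square)
  finally show ?thesis unfolding W_def by simp
qed
lemma G_pos:
  fixes u :: real
  assumes "2 \<le> u"
  shows "0 < -16 + 200*u - 712*u^2 + 1050*u^3 - 715*u^4 + 224*u^5 + 1*u^6"
proof -
  have id: "-16 + 200*u - 712*u^2 + 1050*u^3 - 715*u^4 + 224*u^5 + 1*u^6 = 1728*(u - 2)^0 + 5184*(u - 2)^1 + 6588*(u - 2)^2 + 4450*(u - 2)^3 + 1585*(u - 2)^4 + 236*(u - 2)^5 + 1*(u - 2)^6"
    by algebra
  have "0 \<le> 5184*(u - 2)^1 + 6588*(u - 2)^2 + 4450*(u - 2)^3 + 1585*(u - 2)^4 + 236*(u - 2)^5 + 1*(u - 2)^6"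
    using assms by (intro add_nonneg_nonneg mult_nonneg_nonneg zero_le_power; auto)
  then show ?thesis unfolding id by (auto intro!: add_pos_nonneg)
qed

lemma D_pos:
  fixes u :: real
  assumes "(28/5) \<le> u"
  shows "0 < 12500 - 56250*u + 103125*u^2 - 40625*u^3 - 50000*u^4 + 12500*u^5"
proof -
  have id: "12500 - 56250*u + 103125*u^2 - 40625*u^3 - 50000*u^4 + 12500*u^5 = 15466092*(u - (28/5))^0 + 23619150*(u - (28/5))^1 + 11964625*(u - (28/5))^2 + 2759375*(u - (28/5))^3 + 300000*(u - (28/5))^4 + 12500*(u - (28/5))^5"
    by algebra
  have "0 \<le> 23619150*(u - (28/5))^1 + 11964625*(u - (28/5))^2 + 2759375*(u - (28/5))^3 + 300000*(u - (28/5))^4 + 12500*(u - (28/5))^5"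
    using assms by (intro add_nonneg_nonneg mult_nonneg_nonneg zero_le_power; auto)
  then show ?thesis unfolding id by (auto intro!: add_pos_nonneg)
qed

lemma E3_pos:
  fixes t :: real
  assumes "3 \<le> t"
  shows "0 < 1 - 15*t - 297*t^2 + 135*t^3"
proof -
  have id: "1 - 15*t - 297*t^2 + 135*t^3 = 928*(t - 3)^0 + 1848*(t - 3)^1 + 918*(t - 3)^2 + 135*(t - 3)^3"
    by algebra
  have "0 \<le> 1848*(t - 3)^1 + 918*(t - 3)^2 + 135*(t - 3)^3"
    using assms by (intro add_nonneg_nonneg mult_nonneg_nonneg zero_le_power; auto)
  then show ?thesis unfolding id by (auto intro!: add_pos_nonneg)
qed

lemma cubR3:
  fixes t :: real
  assumes "1 \<le> t" "t \<le> 3"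
  shows "22 \<le> -1 + 12*t + 12*t^2 - 1*t^3"
proof -
  have id: "8 * ((-1 + 12*t + 12*t^2 - 1*t^3) - 22) = 66 * (t - 1)^1 * (3 - t)^2 + 168 * (t - 1)^2 * (3 - t)^1 + 94 * (t - 1)^3"
    by algebra
  have "0 \<le> 66 * (t - 1)^1 * (3 - t)^2 + 168 * (t - 1)^2 * (3 - t)^1 + 94 * (t - 1)^3"
    using assms by (intro add_nonneg_nonneg mult_nonneg_nonneg zero_le_power; auto)
  then have "0 \<le> 8 * ((-1 + 12*t + 12*t^2 - 1*t^3) - 22)" unfolding id .
  then show ?thesis by (rule cert_helper) simp
qed
lemma scaled_le: "(c::real)*(a - b) = d \<Longrightarrow> 0 < d \<Longrightarrow> 0 < c \<Longrightarrow> b \<le> a"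
proof -
  assume a: "c*(a - b) = d" "0 < d" "0 < c"
  then have "0 < c*(a-b)" by simp
  then have "0 < a - b" using a(3) by (simp add: zero_less_mult_iff)
  then show ?thesis by simp
qed

lemma R1_le_64:
  fixes t :: real assumes "1 \<le> t" "t \<le> 13" shows "R1 t \<le> 64"
proof -
  have "256 - (t+3)*(9-t)^2 = (t-1)^2*(13-t)" by algebra
  moreover have "0 \<le> (t-1)^2*(13-t)" using assms by simp
  ultimately have "(t+3)*(9-t)^2 \<le> 256" by linarith
  then show ?thesis unfolding R1_def by simp
qed

lemma R1_le_R3:
  fixes t :: real assumes "1 \<le> t" "t \<le> 3" shows "R1 t \<le> R3 t"
proof -
  have "(3*t+1)*(9*t-1)^2 - t^3*((t+3)*(9-t)^2) = (t-1)^3*(-1 + 12*t + 12*t^2 - 1*t^3)" by algebra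
  moreover have "0 \<le> (t-1)^3*(-1 + 12*t + 12*t^2 - 1*t^3)" using cubR3[OF assms] assms by simp
  ultimately have "t^3*((t+3)*(9-t)^2) \<le> (3*t+1)*(9*t-1)^2" by linarith
  moreover have "0 < t^3" using assms by simp
  ultimately have "(t+3)*(9-t)^2 \<le> (3*t+1)*(9*t-1)^2 / t^3" by (simp add: le_divide_eq mult.commute)
  then show ?thesis unfolding R1_def R3_def by (simp add: divide_right_mono)
qed

lemma K3_le_R3:
  fixes t :: real assumes "3 \<le> t" shows "27*(1+3/t) \<le> R3 t"
proof -
  have "(3*t+1)*(9*t-1)^2 - 108*t^2*(t+3) = 1 - 15*t - 297*t^2 + 135*t^3" by algebra
  then have a: "108*t^2*(t+3) \<le> (3*t+1)*(9*t-1)^2" using E3_pos[OF assms] by linarith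
  have tp: "0 < t" using assms by simp
  have "27*(1+3/t) = 108*t^2*(t+3) / (4*t^3)" using tp by (simp add: field_simps power2_eq_square power3_eq_cube)
  also have "\<dots> \<le> (3*t+1)*(9*t-1)^2 / (4*t^3)" using a tp by (intro divide_right_mono) auto
  finally show ?thesis unfolding R3_def .
qed

lemma K3_le_R2u:
  fixes t :: real
  assumes t3: "3 \<le> t"
  defines "u \<equiv> t + sqrt (t^2 - t + 1)"
  shows "27*(1+3/t) \<le> R2u u"
proof -
  have t1: "1 < t" using t3 by simp
  have u2: "2 < u" and h: "t*(2*u-1) = u^2-1" using upar[OF t1] unfolding u_def by auto
  have "7 \<le> t^2 - t + 1"
  proof -
    have "2*3 \<le> t*(t-1)" using mult_mono[of 3 t 2 "t-1"] t3 by simp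
    then show ?thesis by (simp add: power2_eq_square algebra_simps)
  qed
  then have "sqrt ((13/5)^2) \<le> sqrt (t^2 - t + 1)" by (intro real_sqrt_le_mono) (simp add: power2_eq_square)
  then have "13/5 \<le> sqrt (t^2 - t + 1)" by simp
  then have u5: "28/5 \<le> u" unfolding u_def using t3 by simp
  have D: "0 < 12500 - 56250*u + 103125*u^2 - 40625*u^3 - 50000*u^4 + 12500*u^5"
    using D_pos[OF u5] by simp
  have D': "(u^2+6*u-4)*(2*u-1)^2*(u+1) \<le> 8*(u-1)*u^2*(u^2+2*u-2)"
  proof -
    have "3125*(8*(u-1)*u^2*(u^2+2*u-2) - (u^2+6*u-4)*(2*u-1)^2*(u+1)) = 12500 - 56250*u + 103125*u^2 - 40625*u^3 - 50000*u^4 + 12500*u^5"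
      by algebra
    then show ?thesis using D by (rule scaled_le) simp
  qed
  define Dn where "Dn = (2*u-1)^2*(u+1)^2"
  have dp: "0 < Dn" unfolding Dn_def using u2 by simp
  have PI: "27*(u^2+6*u-4)*Dn \<le> 216*u^2*(u^2+2*u-2)*(u^2-1)"
  proof -
    have "27*(u^2+6*u-4)*Dn = 27*(u+1)*((u^2+6*u-4)*(2*u-1)^2*(u+1))" unfolding Dn_def by algebra
    also have "\<dots> \<le> 27*(u+1)*(8*(u-1)*u^2*(u^2+2*u-2))" using D' u2 by (intro mult_left_mono) auto
    also have "\<dots> = 216*u^2*(u^2+2*u-2)*(u^2-1)" by algebra
    finally show ?thesis .
  qed
  have a1: "(2*u-1)*(27*(t+3)*Dn) = 27*(u^2+6*u-4)*Dn" using h by algebra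
  have a2: "(2*u-1)*(216*u^2*(u^2+2*u-2)*t) = 216*u^2*(u^2+2*u-2)*(u^2-1)" using h by algebra
  have "(2*u-1)*(27*(t+3)*Dn) \<le> (2*u-1)*(216*u^2*(u^2+2*u-2)*t)" unfolding a1 a2 by (rule PI)
  then have b: "27*(t+3)*Dn \<le> 216*u^2*(u^2+2*u-2)*t" by (rule mult_left_le_imp_le) (use u2 in simp)
  have tp: "0 < t" using t3 by simp
  have "27*(1+3/t) = (27*(t+3)*Dn)/(t*Dn)" using tp dp by (simp add: field_simps)
  also have "\<dots> \<le> (216*u^2*(u^2+2*u-2)*t)/(t*Dn)" using b tp dp by (intro divide_right_mono) auto
  also have "\<dots> = (216*u^2*(u^2+2*u-2)*t)/(Dn*t)" by (simp only: mult.commute[of t Dn])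
  also have "\<dots> = (216*u^2*(u^2+2*u-2))/Dn" by (rule nonzero_mult_divide_mult_cancel_right) (use tp in simp)
  also have "\<dots> = R2u u" unfolding R2u_def Dn_def ..
  finally show ?thesis .
qed
lemma sextic_sign:
  fixes t :: real
  assumes t1: "1 < t" and t3: "t < 3"
  defines "u \<equiv> t + sqrt (t^2 - t + 1)"
  shows "sextic t \<le> 0 \<Longrightarrow> R1 t \<le> R2u u" and "0 \<le> sextic t \<Longrightarrow> R2u u \<le> R1 t"
proof -
  have u2: "2 < u" and h: "t*(2*u-1) = u^2-1" using upar[OF t1] unfolding u_def by auto
  have Sx: "sextic t * (2*u-1)^6 = 1024 - 15872*u + 88384*u^2 - 264192*u^3 + 508096*u^4 - 675248*u^5 + 597136*u^6 - 312664*u^7 + 72929*u^8 + 9792*u^9 - 6130*u^10 + 200*u^11 + 1*u^12"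
proof -
    have "sextic t * (2*u-1)^6 = (3456)*(t*(2*u-1))^0*(2*u-1)^6 + (-5184)*(t*(2*u-1))^1*(2*u-1)^5 + (3561)*(t*(2*u-1))^2*(2*u-1)^4 + (596)*(t*(2*u-1))^3*(2*u-1)^3 + (-1506)*(t*(2*u-1))^4*(2*u-1)^2 + (100)*(t*(2*u-1))^5*(2*u-1)^1 + (1)*(t*(2*u-1))^6*(2*u-1)^0"
      unfolding sextic_def by algebra
    also have "\<dots> = (3456)*(u^2-1)^0*(2*u-1)^6 + (-5184)*(u^2-1)^1*(2*u-1)^5 + (3561)*(u^2-1)^2*(2*u-1)^4 + (596)*(u^2-1)^3*(2*u-1)^3 + (-1506)*(u^2-1)^4*(2*u-1)^2 + (100)*(u^2-1)^5*(2*u-1)^1 + (1)*(u^2-1)^6*(2*u-1)^0" unfolding h ..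
    also have "\<dots> = 1024 - 15872*u + 88384*u^2 - 264192*u^3 + 508096*u^4 - 675248*u^5 + 597136*u^6 - 312664*u^7 + 72929*u^8 + 9792*u^9 - 6130*u^10 + 200*u^11 + 1*u^12"
      by algebra
    finally show ?thesis .
  qed
  have SQ: "(1024 - 15872*u + 88384*u^2 - 264192*u^3 + 508096*u^4 - 675248*u^5 + 597136*u^6 - 312664*u^7 + 72929*u^8 + 9792*u^9 - 6130*u^10 + 200*u^11 + 1*u^12) * (u-2)^2
     = (-256 + 1024*u - 1936*u^2 + 2568*u^3 - 1704*u^4 + 378*u^5 + 61*u^6 - 28*u^7 + 1*u^8) * (-16 + 200*u - 712*u^2 + 1050*u^3 - 715*u^4 + 224*u^5 + 1*u^6)"
    by algebra
  have nz: "2*u-1 \<noteq> 0" "u*2-1 \<noteq> 0" "u+1 \<noteq> 0" "1+u \<noteq> 0" using u2 by auto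
  have R1e: "R1 t * (4*(2*u-1)^3) = (u^2+6*u-4)*(18*u-u^2-8)^2"
    unfolding R1_def using h by algebra
  have dnz: "(2*u-1)^2*(u+1)^2 \<noteq> 0" using nz by simp
  have R2a: "R2u u * ((2*u-1)^2*(u+1)^2) = 216*u^2*(u^2+2*u-2)" unfolding R2u_def using dnz by simp
  have R2e: "R2u u * (4*(2*u-1)^3*(u+1)^2) = 864*u^2*(u^2+2*u-2)*(2*u-1)"
  proof -
    have "R2u u * (4*(2*u-1)^3*(u+1)^2) = (R2u u * ((2*u-1)^2*(u+1)^2)) * (4*(2*u-1))"
      by (simp add: algebra_simps power2_eq_square power3_eq_cube)
    then show ?thesis unfolding R2a by (simp add: algebra_simps)
  qed
  have Qe: "(-256 + 1024*u - 1936*u^2 + 2568*u^3 - 1704*u^4 + 378*u^5 + 61*u^6 - 28*u^7 + 1*u^8)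
     = (u+1)^2*((u^2+6*u-4)*(18*u-u^2-8)^2) - 864*u^2*(u^2+2*u-2)*(2*u-1)" by algebra
  define P2 where "P2 = (-16 + 200*u - 712*u^2 + 1050*u^3 - 715*u^4 + 224*u^5 + 1*u^6) * (4*(2*u-1)^3*(u+1)^2)"
  define P1 where "P1 = (2*u-1)^6 * (u-2)^2"
  have P2pos: "0 < P2" unfolding P2_def using G_pos[of u] u2 by (intro mult_pos_pos) auto
  have P1pos: "0 < P1" unfolding P1_def using u2 by (intro mult_pos_pos) auto
  have E: "sextic t * P1 = P2 * (R1 t - R2u u)"
  proof -
    have "sextic t * P1 = (sextic t * (2*u-1)^6) * (u-2)^2" unfolding P1_def by (simp add: mult.assoc)
    also have "\<dots> = (-256 + 1024*u - 1936*u^2 + 2568*u^3 - 1704*u^4 + 378*u^5 + 61*u^6 - 28*u^7 + 1*u^8) * (-16 + 200*u - 712*u^2 + 1050*u^3 - 715*u^4 + 224*u^5 + 1*u^6)"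
      unfolding Sx by (rule SQ)
    also have "\<dots> = ((u+1)^2*(R1 t * (4*(2*u-1)^3)) - R2u u * (4*(2*u-1)^3*(u+1)^2)) * (-16 + 200*u - 712*u^2 + 1050*u^3 - 715*u^4 + 224*u^5 + 1*u^6)"
      unfolding Qe R1e R2e ..
    also have "\<dots> = P2 * (R1 t - R2u u)" unfolding P2_def by (simp add: algebra_simps)
    finally show ?thesis .
  qed
  show "sextic t \<le> 0 \<Longrightarrow> R1 t \<le> R2u u"
  proof -
    assume "sextic t \<le> 0"
    then have "sextic t * P1 \<le> 0" using P1pos by (simp add: mult_nonpos_nonneg)
    then have "P2 * (R1 t - R2u u) \<le> 0" unfolding E .
    then show ?thesis using P2pos by (simp add: mult_le_0_iff)
  qed
  show "0 \<le> sextic t \<Longrightarrow> R2u u \<le> R1 t"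
  proof -
    assume "0 \<le> sextic t"
    then have "0 \<le> sextic t * P1" using P1pos by simp
    then have "0 \<le> P2 * (R1 t - R2u u)" unfolding E .
    then show ?thesis using P2pos by (simp add: zero_le_mult_iff)
  qed
qed

definition Kf :: "real \<Rightarrow> real" where
  "Kf \<theta> =
    (if \<theta> \<ge> 3 then 27*(1+3/\<theta>)
     else if theta_star \<le> \<theta> then (\<theta>+3)*(9-\<theta>)^2/4
     else if 1 < \<theta> then
       (let \<rho> = sqrt (\<theta>^2 - \<theta> + 1) in
        216*((\<theta>+1)*(\<theta>-1)^2 / ((2*\<theta> - 1 - \<rho>) * (\<theta> - 2 + \<rho>) * (\<theta> + 1 + \<rho>))))
     else 64)"

lemma root3_27: "root 3 27 = 3" by (rule real_root_pos_unique) auto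
lemma root3_216: "root 3 216 = 6" by (rule real_root_pos_unique) auto
lemma root3_64: "root 3 64 = 4" by (rule real_root_pos_unique) auto
lemma root3_8: "root 3 (1/8) = 1/2" by (rule real_root_pos_unique) (auto simp: power_divide)

lemma Rmax_Kf: "Rmax_formula t = 1 - root 3 (Kf t) / 4"
proof -
  have b1: "(3/4) * root 3 (1 + 3/t) = root 3 (27*(1+3/t)) / 4"
    by (simp only: real_root_mult root3_27)
  have b2: "(1/8) * root 3 (2*(t+3)*(9-t)^2) = root 3 ((t+3)*(9-t)^2/4) / 4"
  proof -
    have "(t+3)*(9-t)^2/4 = (1/8) * (2*(t+3)*(9-t)^2)" by simp
    then have "root 3 ((t+3)*(9-t)^2/4) = root 3 (1/8) * root 3 (2*(t+3)*(9-t)^2)"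
      by (simp only: real_root_mult)
    then show ?thesis by (simp add: root3_8)
  qed
  have b3: "\<And>X. (3/2) * root 3 X = root 3 (216 * X) / 4"
    by (simp add: real_root_mult root3_216)
  show ?thesis unfolding Rmax_formula_def Kf_def Let_def
    using b1 b2 b3 by (simp add: root3_64)
qed
definition goodK :: "real \<Rightarrow> real \<Rightarrow> bool" where
  "goodK K t \<longleftrightarrow> 0 < K \<and> K \<le> 64
     \<and> (\<forall>q. 0 \<le> q \<and> q \<le> 1/3 \<longrightarrow> K*(t*q^3 + 3*q^2*(1-3*q)) \<le> t+3)
     \<and> (\<forall>q. 0 \<le> q \<and> q \<le> 1/3 \<longrightarrow> K*(q^3 + 3*t*q^2*(1-3*q)) \<le> 3*t+1)
     \<and> (\<forall>y. 0 \<le> y \<and> y \<le> 1 \<longrightarrow> K*(y*(1-y)*(t*y+1-y)/4) \<le> 2*t+2)"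

lemma Kf_b1:
  fixes t :: real
  assumes t1: "1 < t" and ts: "t < theta_star"
  shows "Kf t = R2u (t + sqrt (t^2 - t + 1))"
proof -
  have t3: "\<not> 3 \<le> t" using ts theta_star_props by auto
  define r where "r = sqrt (t^2 - t + 1)"
  define u where "u = t + r"
  have u2: "2 < u" and h: "t*(2*u-1) = u^2-1" and hD: "(2*t-1-r)*(t-2+r)*(t+1+r)*(2*u-1) = (u-2)^2*(u+1)^2"
    using upar[OF t1] unfolding u_def r_def by auto
  define D where "D = (2*t-1-r)*(t-2+r)*(t+1+r)"
  have hD': "D*(2*u-1) = (u-2)^2*(u+1)^2" unfolding D_def using hD .
  have nz: "2*u-1 \<noteq> 0" "u+1 \<noteq> 0" "u - 2 \<noteq> 0" using u2 by auto
  have Dnz: "D \<noteq> 0" using hD' nz by auto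
  have Dn: "(2*u-1)^2*(u+1)^2 \<noteq> 0" using nz by simp
  have e1: "(t+1)*(2*u-1) = u^2+2*u-2" using h by algebra
  have e2: "(t-1)*(2*u-1) = u*(u-2)" using h by algebra
  have "(2*u-1)*((t+1)*(t-1)^2*((2*u-1)^2*(u+1)^2)) = ((t+1)*(2*u-1))*((t-1)*(2*u-1))^2*(u+1)^2"
    by algebra
  also have "\<dots> = (u^2+2*u-2)*(u*(u-2))^2*(u+1)^2" unfolding e1 e2 ..
  also have "\<dots> = u^2*(u^2+2*u-2)*((u-2)^2*(u+1)^2)" by algebra
  also have "\<dots> = u^2*(u^2+2*u-2)*(D*(2*u-1))" unfolding hD' ..
  also have "\<dots> = (2*u-1)*(u^2*(u^2+2*u-2)*D)" by algebra
  finally have "(t+1)*(t-1)^2*((2*u-1)^2*(u+1)^2) = u^2*(u^2+2*u-2)*D"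
    using nz by simp
  then have "(t+1)*(t-1)^2/D = u^2*(u^2+2*u-2)/((2*u-1)^2*(u+1)^2)"
    using Dnz Dn by (simp add: frac_eq_eq algebra_simps)
  moreover have "Kf t = 216*((t+1)*(t-1)^2/D)"
    unfolding Kf_def D_def r_def using t3 ts t1 by (simp add: Let_def)
  ultimately show ?thesis unfolding R2u_def u_def r_def by simp
qed
lemma good_from:
  fixes K t :: real
  assumes "0 < K" "K \<le> 64"
    "\<And>q. 0 \<le> q \<Longrightarrow> q \<le> 1/3 \<Longrightarrow> K*(t*q^3 + 3*q^2*(1-3*q)) \<le> t+3"
    "\<And>q. 0 \<le> q \<Longrightarrow> q \<le> 1/3 \<Longrightarrow> K*(q^3 + 3*t*q^2*(1-3*q)) \<le> 3*t+1"
    "\<And>y. 0 \<le> y \<Longrightarrow> y \<le> 1 \<Longrightarrow> K*(y*(1-y)*(t*y+1-y)/4) \<le> 2*t+2"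
  shows "goodK K t"
  unfolding goodK_def using assms by blast

lemma R2u_pos: "2 < u \<Longrightarrow> 0 < R2u u"
proof -
  assume u: "2 < u"
  have "2*2 \<le> u*u" using mult_mono[of 2 u 2 u] u by simp
  then have "0 < u^2+2*u-2" using u by (simp add: power2_eq_square)
  then show ?thesis unfolding R2u_def using u by (intro divide_pos_pos mult_pos_pos) auto
qed

lemma goodK_Kf:
  fixes t :: real
  assumes t1: "1 \<le> t"
  shows "goodK (Kf t) t"
proof -
  have TS: "1 < theta_star" "theta_star < 3"
    "\<And>x. 1 \<le> x \<Longrightarrow> x \<le> theta_star \<Longrightarrow> 0 \<le> sextic x"
    "\<And>x. theta_star \<le> x \<Longrightarrow> x \<le> 3 \<Longrightarrow> sextic x \<le> 0"
    using theta_star_props by auto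
  consider "3 \<le> t" | "theta_star \<le> t \<and> t < 3" | "1 < t \<and> t < theta_star" | "t = 1"
    using t1 by linarith
  then show ?thesis
  proof cases
    case 1
    have K: "Kf t = 27*(1+3/t)" unfolding Kf_def using 1 by simp
    have tp: "0 < t" using 1 by simp
    have K54: "27*(1+3/t) \<le> 54"
    proof -
      have "3/t \<le> 1" using 1 by simp
      then show ?thesis by simp
    qed
    have Kp: "0 < 27*(1+3/t)" using tp by (simp add: add_pos_pos)
    show ?thesis unfolding K
    proof (rule good_from)
      show "0 < 27*(1+3/t)" by (rule Kp)
      show "27*(1+3/t) \<le> 64" using K54 by simp
    next
      fix q :: real assume q: "0 \<le> q" "q \<le> 1/3"
      have M: "27*(t*q^3 + 3*q^2*(1-3*q)) \<le> t" by (rule M1b[OF 1 q])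
      have "27*(1+3/t)*(t*q^3 + 3*q^2*(1-3*q)) = (t+3)/t * (27*(t*q^3 + 3*q^2*(1-3*q)))"
        using tp by (simp add: field_simps)
      also have "\<dots> \<le> (t+3)/t * t" using M tp by (intro mult_left_mono) auto
      also have "\<dots> = t+3" using tp by simp
      finally show "27*(1+3/t)*(t*q^3 + 3*q^2*(1-3*q)) \<le> t+3" .
    next
      fix q :: real assume q: "0 \<le> q" "q \<le> 1/3"
      show "27*(1+3/t)*(q^3 + 3*t*q^2*(1-3*q)) \<le> 3*t+1"
        by (rule C3_from) (use Kp K3_le_R3[OF 1] 1 q in auto)
    next
      fix y :: real assume y: "0 \<le> y" "y \<le> 1"
      show "27*(1+3/t)*(y*(1-y)*(t*y+1-y)/4) \<le> 2*t+2"
        by (rule C2_from) (use Kp K3_le_R2u[OF 1] 1 y in auto)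
    qed
  next
    case 2
    have K: "Kf t = R1 t" unfolding Kf_def R1_def using 2 by simp
    have tg1: "1 < t" using 2 TS by simp
    have Kp: "0 < R1 t" unfolding R1_def using 2 t1 by (intro divide_pos_pos mult_pos_pos) auto
    have sx: "sextic t \<le> 0" using TS(4)[of t] 2 by simp
    have R12: "R1 t \<le> R2u (t + sqrt (t^2 - t + 1))" using sextic_sign(1)[OF tg1 _ sx] 2 by simp
    show ?thesis unfolding K
    proof (rule good_from)
      show "0 < R1 t" by (rule Kp)
      show "R1 t \<le> 64" using R1_le_64[of t] 2 t1 by simp
    next
      fix q :: real assume q: "0 \<le> q" "q \<le> 1/3"
      show "R1 t*(t*q^3 + 3*q^2*(1-3*q)) \<le> t+3"
        by (rule C1_from) (use Kp 2 t1 q in auto)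
    next
      fix q :: real assume q: "0 \<le> q" "q \<le> 1/3"
      show "R1 t*(q^3 + 3*t*q^2*(1-3*q)) \<le> 3*t+1"
        by (rule C3_from) (use Kp R1_le_R3[of t] 2 t1 q in auto)
    next
      fix y :: real assume y: "0 \<le> y" "y \<le> 1"
      show "R1 t*(y*(1-y)*(t*y+1-y)/4) \<le> 2*t+2"
        by (rule C2_from) (use Kp R12 tg1 y in auto)
    qed
  next
    case 3
    define u where "u = t + sqrt (t^2 - t + 1)"
    have K: "Kf t = R2u u" unfolding u_def using Kf_b1 3 by auto
    have u2: "2 < u" using upar(1)[of t] 3 unfolding u_def by auto
    have Kp: "0 < R2u u" by (rule R2u_pos[OF u2])
    have sx: "0 \<le> sextic t" using TS(3)[of t] 3 by simp
    have R21: "R2u u \<le> R1 t" using sextic_sign(2)[of t, OF _ _ sx] 3 TS unfolding u_def by simp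
    have R1_64: "R1 t \<le> 64" using R1_le_64[of t] 3 TS by simp
    have R13: "R1 t \<le> R3 t" using R1_le_R3[of t] 3 TS by simp
    show ?thesis unfolding K
    proof (rule good_from)
      show "0 < R2u u" by (rule Kp)
      show "R2u u \<le> 64" using R21 R1_64 by simp
    next
      fix q :: real assume q: "0 \<le> q" "q \<le> 1/3"
      show "R2u u*(t*q^3 + 3*q^2*(1-3*q)) \<le> t+3"
        by (rule C1_from) (use Kp R21 3 TS q in auto)
    next
      fix q :: real assume q: "0 \<le> q" "q \<le> 1/3"
      show "R2u u*(q^3 + 3*t*q^2*(1-3*q)) \<le> 3*t+1"
        by (rule C3_from) (use Kp R21 R13 3 q in auto)
    next
      fix y :: real assume y: "0 \<le> y" "y \<le> 1"
      show "R2u u*(y*(1-y)*(t*y+1-y)/4) \<le> 2*t+2"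
        by (rule C2_from) (use Kp 3 y in \<open>auto simp: u_def\<close>)
    qed
  next
    case 4
    have K: "Kf t = 64" unfolding Kf_def using 4 TS by simp
    have R1e: "R1 1 = 64" unfolding R1_def by simp
    have R3e: "R3 1 = 64" unfolding R3_def by simp
    have "goodK 64 1"
    proof (rule good_from)
      fix q :: real assume q: "0 \<le> q" "q \<le> 1/3"
      show "64*(1*q^3 + 3*q^2*(1-3*q)) \<le> 1+3"
        by (rule C1_from) (use R1e q in auto)
    next
      fix q :: real assume q: "0 \<le> q" "q \<le> 1/3"
      show "64*(q^3 + 3*1*q^2*(1-3*q)) \<le> 3*1+1"
        by (rule C3_from) (use R3e q in auto)
    next
      fix y :: real assume y: "0 \<le> y" "y \<le> 1"
      have "4 - 16*(y*(1-y)) = 4*(2*y-1)^2" by algebra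
      then have "16*(y*(1-y)) \<le> 4" by (smt (verit) zero_le_power2)
      then show "64*(y*(1-y)*(1*y+1-y)/4) \<le> 2*1+2" by simp
    qed auto
    then show ?thesis using K 4 by simp
  qed
qed
definition attains :: "real \<Rightarrow> real \<Rightarrow> real \<Rightarrow> bool" where
  "attains K t a \<longleftrightarrow> (\<exists>v1 v2 v3 v4 p1 p2 p3 p4.
     (v1 = a \<or> v1 = t*a) \<and> (v2 = a \<or> v2 = t*a) \<and> (v3 = a \<or> v3 = t*a) \<and> (v4 = a \<or> v4 = t*a) \<and>
     0 \<le> p1 \<and> 0 \<le> p2 \<and> 0 \<le> p3 \<and> 0 \<le> p4 \<and> p1+p2+p3+p4 = 1 \<and>
     K * Lv (v1,v2,v3,v4) (p1,p2,p3,p4) = v1+v2+v3+v4)"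

lemma attains_I:
  assumes "(v1 = a \<or> v1 = t*a)" "(v2 = a \<or> v2 = t*a)" "(v3 = a \<or> v3 = t*a)" "(v4 = a \<or> v4 = t*a)"
    "0 \<le> p1" "0 \<le> p2" "0 \<le> p3" "0 \<le> p4" "p1+p2+p3+p4 = 1"
    "K * Lv (v1,v2,v3,v4) (p1,p2,p3,p4) = v1+v2+v3+v4"
  shows "attains K t a"
  unfolding attains_def using assms by blast

lemma attain_A:
  fixes t a :: real assumes "3 \<le> t"
  shows "attains (27*(1+3/t)) t a"
proof (rule attains_I[of "t*a" a t a a a 0 "1/3" "1/3" "1/3"])
  show "27*(1+3/t) * Lv (t*a,a,a,a) (0,1/3,1/3,1/3) = t*a+a+a+a"
    unfolding Lv_def using assms by (simp add: field_simps)
qed auto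

lemma attain_B:
  fixes t a :: real assumes "1 \<le> t" "t \<le> 3"
  shows "attains (R1 t) t a"
proof -
  define d where "d = 1/(9-t)"
  have sd: "(9-t)*d = 1" unfolding d_def using assms by simp
  have d0: "0 < d" unfolding d_def using assms by simp
  show ?thesis
  proof (rule attains_I[of "t*a" a t a a a "(3-t)*d" "2*d" "2*d" "2*d"])
    have L: "Lv (t*a,a,a,a) ((3-t)*d,2*d,2*d,2*d) = 4*a*(9-t)*d^3"
      unfolding Lv_def by simp algebra
    have "R1 t * (4*a*(9-t)*d^3) = (t+3)*a*((9-t)*d)^3"
      unfolding R1_def by algebra
    then have E2: "R1 t * (4*a*(9-t)*d^3) = (t+3)*a" unfolding sd by simp
    show "R1 t * Lv (t*a,a,a,a) ((3-t)*d,2*d,2*d,2*d) = t*a+a+a+a"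
      unfolding L E2 by (simp add: algebra_simps)
    have "(3-t)*d + 2*d + 2*d + 2*d = (9-t)*d" by algebra
    then show "(3-t)*d + 2*d + 2*d + 2*d = 1" using sd by simp
  qed (use assms d0 in auto)
qed

lemma attain_C:
  fixes t a :: real assumes t1: "1 < t"
  defines "u \<equiv> t + sqrt (t^2 - t + 1)"
  shows "attains (R2u u) t a"
proof -
  have u2: "2 < u" and h: "t*(2*u-1) = u^2-1" using upar[OF t1] unfolding u_def by auto
  have nz: "2*u-1 \<noteq> 0" "u \<noteq> 0" "u+1 \<noteq> 0" using u2 by auto
  define x where "x = (u+1)/(3*u)"
  define y where "y = (2*u-1)/(3*u)"
  have xy: "x + y = 1" unfolding x_def y_def using nz by (simp add: field_simps)
  have x0: "0 \<le> x" "0 \<le> y" unfolding x_def y_def using u2 by auto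
  have ty: "t*y = (u^2-1)/(3*u)" unfolding y_def using h by simp
  have xty: "x + t*y = (u+1)/3" unfolding ty x_def using nz by (simp add: field_simps power2_eq_square)
  have xy2: "x*y = (u+1)*(2*u-1)/(9*u^2)" unfolding x_def y_def by (simp add: power2_eq_square)
  have e1: "(t+1)*(2*u-1) = u^2+2*u-2" using h by algebra
  show ?thesis
  proof (rule attains_I[of "t*a" a t "t*a" a a "x/2" "x/2" "y/2" "y/2"])
    show "x/2 + x/2 + y/2 + y/2 = 1" using xy by simp
    have L: "Lv (t*a,t*a,a,a) (x/2,x/2,y/2,y/2) = a*((x*y)*(x+t*y))/4"
      unfolding Lv_def by (simp add: algebra_simps power2_eq_square)
    have L2: "Lv (t*a,t*a,a,a) (x/2,x/2,y/2,y/2) = a*((u+1)^2*(2*u-1))/(108*u^2)"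
      unfolding L xty xy2 using nz by (simp add: field_simps power2_eq_square)
    define V where "V = Lv (t*a,t*a,a,a) (x/2,x/2,y/2,y/2)"
    define Dn where "Dn = (2*u-1)^2*(u+1)^2"
    have Dnz: "Dn \<noteq> 0" unfolding Dn_def using nz by simp
    have A: "R2u u * Dn = 216*u^2*(u^2+2*u-2)" unfolding R2u_def Dn_def using Dnz[unfolded Dn_def] by simp
    have B: "V * (108*u^2) = a*((u+1)^2*(2*u-1))" unfolding V_def L2 using nz by simp
    have C: "(R2u u * V) * (Dn*(108*u^2)) = (216*u^2*(u^2+2*u-2))*(a*((u+1)^2*(2*u-1)))"
    proof -
      have "(R2u u * V) * (Dn*(108*u^2)) = (R2u u * Dn) * (V*(108*u^2))" by (simp add: ac_simps)
      then show ?thesis unfolding A B .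
    qed
    have D: "(t*a+t*a+a+a) * (Dn*(108*u^2)) = (216*u^2*(u^2+2*u-2))*(a*((u+1)^2*(2*u-1)))"
    proof -
      have "(t*a+t*a+a+a) * (Dn*(108*u^2)) = 216*u^2*((t+1)*(2*u-1))*(a*((u+1)^2*(2*u-1)))"
        unfolding Dn_def by algebra
      then show ?thesis unfolding e1 .
    qed
    have cnz: "Dn*(108*u^2) \<noteq> 0" using Dnz nz by simp
    show "R2u u * Lv (t*a,t*a,a,a) (x/2,x/2,y/2,y/2) = t*a+t*a+a+a"
      using C D cnz unfolding V_def[symmetric] by (metis mult_right_cancel)
  qed (use x0 in auto)
qed

lemma attain_Kf:
  fixes t a :: real assumes t1: "1 \<le> t"
  shows "attains (Kf t) t a"
proof -
  have TS: "1 < theta_star" "theta_star < 3" using theta_star_props by auto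
  consider "3 \<le> t" | "theta_star \<le> t \<and> t < 3" | "1 < t \<and> t < theta_star" | "t = 1"
    using t1 by linarith
  then show ?thesis
  proof cases
    case 1
    then have "Kf t = 27*(1+3/t)" unfolding Kf_def by simp
    then show ?thesis using attain_A[OF 1] by simp
  next
    case 2
    then have "Kf t = R1 t" unfolding Kf_def R1_def by simp
    then show ?thesis using attain_B[of t a] 2 t1 by simp
  next
    case 3
    then have "Kf t = R2u (t + sqrt (t^2 - t + 1))" using Kf_b1 by auto
    then show ?thesis using attain_C[of t a] 3 by simp
  next
    case 4
    then have "Kf t = R1 t" unfolding Kf_def R1_def using TS by simp
    then show ?thesis using attain_B[of t a] 4 by simp
  qed
qed
lemma sup_le:
  fixes K S :: real and v
  assumes K: "0 < K" and B: "\<And>p. p \<in> simplex4 \<Longrightarrow> K * Lv v p \<le> S"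
    and P: "p0 \<in> simplex4" "0 < Lv v p0"
  shows "K \<le> S / (SUP p\<in>simplex4. Lv v p)" and "0 < (SUP p\<in>simplex4. Lv v p)"
proof -
  have ne: "simplex4 \<noteq> {}" using P by auto
  have bd: "\<And>p. p \<in> simplex4 \<Longrightarrow> Lv v p \<le> S/K" using B K by (simp add: le_divide_eq mult.commute)
  have bdd: "bdd_above ((\<lambda>p. Lv v p) ` simplex4)" using bd by (intro bdd_aboveI2) auto
  have up: "(SUP p\<in>simplex4. Lv v p) \<le> S/K" using ne bd by (intro cSUP_least) auto
  have lo: "Lv v p0 \<le> (SUP p\<in>simplex4. Lv v p)" using P bdd by (intro cSUP_upper) auto
  show pos: "0 < (SUP p\<in>simplex4. Lv v p)" using lo P by simp
  have "0 < K * Lv v p0" by (rule mult_pos_pos[OF K P(2)])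
  then have Sp: "0 < S" using B[OF P(1)] by linarith
  show "K \<le> S / (SUP p\<in>simplex4. Lv v p)"
    using up pos K Sp by (simp add: le_divide_eq divide_le_eq mult.commute)
qed

lemma sup_eq:
  fixes K S :: real and v
  assumes K: "0 < K" and B: "\<And>p. p \<in> simplex4 \<Longrightarrow> K * Lv v p \<le> S"
    and P: "p0 \<in> simplex4" "0 < Lv v p0" and A: "p1 \<in> simplex4" "K * Lv v p1 = S"
  shows "S / (SUP p\<in>simplex4. Lv v p) = K"
proof -
  have ne: "simplex4 \<noteq> {}" using P by auto
  have bd: "\<And>p. p \<in> simplex4 \<Longrightarrow> Lv v p \<le> S/K" using B K by (simp add: le_divide_eq mult.commute)
  have bdd: "bdd_above ((\<lambda>p. Lv v p) ` simplex4)" using bd by (intro bdd_aboveI2) auto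
  have up: "(SUP p\<in>simplex4. Lv v p) \<le> S/K" using ne bd by (intro cSUP_least) auto
  have lo: "Lv v p1 \<le> (SUP p\<in>simplex4. Lv v p)" using A bdd by (intro cSUP_upper) auto
  have "Lv v p1 = S/K" using A K by (simp add: field_simps)
  then have "(SUP p\<in>simplex4. Lv v p) = S/K" using up lo by simp
  moreover have "0 < S"
  proof -
    have "0 < K * Lv v p0" by (rule mult_pos_pos[OF K P(2)])
    then show ?thesis using B[OF P(1)] by linarith
  qed
  ultimately show ?thesis using K by simp
qed

lemma Ru_tuple: "Ru (w1,w2,w3,w4) = 1 - (1/4) * root 3 ((1/w1+1/w2+1/w3+1/w4) / (SUP p\<in>simplex4. Lv (1/w1,1/w2,1/w3,1/w4) p))"
  unfolding Ru_def Let_def by simp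

lemma unif: "(1/4,1/4,1/4,1/4) \<in> simplex4" unfolding simplex4_def by simp

lemma Lv_unif: "Lv (v1,v2,v3,v4) (1/4,1/4,1/4,1/4) = (v1+v2+v3+v4)/64"
  unfolding Lv_def by simp

theorem theorem4:
  fixes \<alpha> \<beta> :: real
  assumes "0 < \<alpha>" and "\<alpha> \<le> \<beta>"
  shows "(\<exists>w\<in>box4 \<alpha> \<beta>. Ru w = Rmax_formula (\<beta>/\<alpha>))
       \<and> (\<forall>w\<in>box4 \<alpha> \<beta>. Ru w \<le> Rmax_formula (\<beta>/\<alpha>))"
proof -
  define t where "t = \<beta>/\<alpha>"
  define a where "a = 1/\<beta>"
  have bp: "0 < \<beta>" using assms by simp
  have t1: "1 \<le> t" unfolding t_def using assms by simp
  have ap: "0 < a" unfolding a_def using bp by simp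
  have ta: "t*a = 1/\<alpha>" unfolding t_def a_def using assms bp by simp
  define K where "K = Kf t"
  have G: "goodK K t" unfolding K_def by (rule goodK_Kf[OF t1])
  have Kp: "0 < K" and K64: "K \<le> 64" using G unfolding goodK_def by auto
  have C1: "\<And>q. 0 \<le> q \<Longrightarrow> q \<le> 1/3 \<Longrightarrow> K*(t*q^3 + 3*q^2*(1-3*q)) \<le> t+3"
   and C3: "\<And>q. 0 \<le> q \<Longrightarrow> q \<le> 1/3 \<Longrightarrow> K*(q^3 + 3*t*q^2*(1-3*q)) \<le> 3*t+1"
   and C2: "\<And>y. 0 \<le> y \<Longrightarrow> y \<le> 1 \<Longrightarrow> K*(y*(1-y)*(t*y+1-y)/4) \<le> 2*t+2"
    using G unfolding goodK_def by auto
  have RM: "Rmax_formula t = 1 - (1/4) * root 3 K" unfolding K_def Rmax_Kf by simp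
  have bound: "\<And>v1 v2 v3 v4 p. a \<le> v1 \<Longrightarrow> v1 \<le> t*a \<Longrightarrow> a \<le> v2 \<Longrightarrow> v2 \<le> t*a \<Longrightarrow>
      a \<le> v3 \<Longrightarrow> v3 \<le> t*a \<Longrightarrow> a \<le> v4 \<Longrightarrow> v4 \<le> t*a \<Longrightarrow> p \<in> simplex4 \<Longrightarrow>
      K * Lv (v1,v2,v3,v4) p \<le> v1+v2+v3+v4"
  proof -
    fix v1 v2 v3 v4 p
    assume v: "a \<le> v1" "v1 \<le> t*a" "a \<le> v2" "v2 \<le> t*a" "a \<le> v3" "v3 \<le> t*a" "a \<le> v4" "v4 \<le> t*a"
      and p: "p \<in> simplex4"
    obtain p1 p2 p3 p4 where pe: "p = (p1,p2,p3,p4)" by (cases p) auto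
    have pc: "0 \<le> p1" "0 \<le> p2" "0 \<le> p3" "0 \<le> p4" "p1+p2+p3+p4 = 1"
      using p unfolding pe simplex4_def by auto
    show "K * Lv (v1,v2,v3,v4) p \<le> v1+v2+v3+v4"
      unfolding pe by (rule boxbound[OF ap t1 less_imp_le[OF Kp] K64 C1 C3 C2 pc v])
  qed
  have part2: "\<forall>w\<in>box4 \<alpha> \<beta>. Ru w \<le> Rmax_formula t"
  proof
    fix w assume w: "w \<in> box4 \<alpha> \<beta>"
    obtain w1 w2 w3 w4 where we: "w = (w1,w2,w3,w4)" by (cases w) auto
    have wb: "\<alpha> \<le> w1" "w1 \<le> \<beta>" "\<alpha> \<le> w2" "w2 \<le> \<beta>" "\<alpha> \<le> w3" "w3 \<le> \<beta>" "\<alpha> \<le> w4" "w4 \<le> \<beta>"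
      using w unfolding we box4_def by auto
    have vb: "\<And>x. \<alpha> \<le> x \<Longrightarrow> x \<le> \<beta> \<Longrightarrow> a \<le> 1/x \<and> 1/x \<le> t*a"
    proof -
      fix x assume x: "\<alpha> \<le> x" "x \<le> \<beta>"
      have xp: "0 < x" using x assms by simp
      have "1/x \<le> 1/\<alpha>" using divide_left_mono[of \<alpha> x 1] x xp assms by simp
      moreover have "1/\<beta> \<le> 1/x" using divide_left_mono[of x \<beta> 1] x xp assms by simp
      ultimately show "a \<le> 1/x \<and> 1/x \<le> t*a" unfolding ta unfolding a_def by simp
    qed
    define S where "S = 1/w1+1/w2+1/w3+1/w4"
    have B: "\<And>p. p \<in> simplex4 \<Longrightarrow> K * Lv (1/w1,1/w2,1/w3,1/w4) p \<le> S"
      unfolding S_def using vb[OF wb(1,2)] vb[OF wb(3,4)] vb[OF wb(5,6)] vb[OF wb(7,8)]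
      by (intro bound) auto
    have Sp: "0 < S" unfolding S_def using wb assms by (intro add_pos_pos) auto
    have P0: "0 < Lv (1/w1,1/w2,1/w3,1/w4) (1/4,1/4,1/4,1/4)" unfolding Lv_unif using Sp S_def by simp
    have "K \<le> S / (SUP p\<in>simplex4. Lv (1/w1,1/w2,1/w3,1/w4) p)"
      by (rule sup_le(1)[OF Kp B unif P0])
    then have "root 3 K \<le> root 3 (S / (SUP p\<in>simplex4. Lv (1/w1,1/w2,1/w3,1/w4) p))" by simp
    then show "Ru w \<le> Rmax_formula t" unfolding we Ru_tuple RM S_def by simp
  qed
  have part1: "\<exists>w\<in>box4 \<alpha> \<beta>. Ru w = Rmax_formula t"
  proof -
    obtain v1 v2 v3 v4 p1 p2 p3 p4 where
      v: "(v1 = a \<or> v1 = t*a)" "(v2 = a \<or> v2 = t*a)" "(v3 = a \<or> v3 = t*a)" "(v4 = a \<or> v4 = t*a)"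
      and pc: "0 \<le> p1" "0 \<le> p2" "0 \<le> p3" "0 \<le> p4" "p1+p2+p3+p4 = 1"
      and eq: "K * Lv (v1,v2,v3,v4) (p1,p2,p3,p4) = v1+v2+v3+v4"
      using attain_Kf[OF t1, of a] unfolding attains_def K_def by blast
    have ab: "1/\<beta> \<le> 1/\<alpha>" using divide_left_mono[of \<alpha> \<beta> 1] assms by simp
    have vv: "\<And>x. x = a \<or> x = t*a \<Longrightarrow> \<alpha> \<le> 1/x \<and> 1/x \<le> \<beta> \<and> 1/(1/x) = x \<and> a \<le> x \<and> x \<le> t*a"
    proof -
      fix x assume "x = a \<or> x = t*a"
      then show "\<alpha> \<le> 1/x \<and> 1/x \<le> \<beta> \<and> 1/(1/x) = x \<and> a \<le> x \<and> x \<le> t*a"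
        unfolding ta using assms ap t1 ab unfolding a_def by auto
    qed
    define w where "w = (1/v1, 1/v2, 1/v3, 1/v4)"
    have wbox: "w \<in> box4 \<alpha> \<beta>" unfolding w_def box4_def using vv[OF v(1)] vv[OF v(2)] vv[OF v(3)] vv[OF v(4)] by auto
    have inv: "1/(1/v1) = v1" "1/(1/v2) = v2" "1/(1/v3) = v3" "1/(1/v4) = v4"
      using vv[OF v(1)] vv[OF v(2)] vv[OF v(3)] vv[OF v(4)] by auto
    define S where "S = v1+v2+v3+v4"
    have B: "\<And>p. p \<in> simplex4 \<Longrightarrow> K * Lv (v1,v2,v3,v4) p \<le> S"
      unfolding S_def using vv[OF v(1)] vv[OF v(2)] vv[OF v(3)] vv[OF v(4)]
      by (intro bound) auto
    have Sp: "0 < S" unfolding S_def using vv[OF v(1)] vv[OF v(2)] vv[OF v(3)] vv[OF v(4)] ap by simp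
    have P0: "0 < Lv (v1,v2,v3,v4) (1/4,1/4,1/4,1/4)" unfolding Lv_unif using Sp S_def by simp
    have eqS: "K * Lv (v1,v2,v3,v4) (p1,p2,p3,p4) = S" unfolding S_def by (rule eq)
    have P1: "(p1,p2,p3,p4) \<in> simplex4" unfolding simplex4_def using pc by auto
    have "S / (SUP p\<in>simplex4. Lv (v1,v2,v3,v4) p) = K"
      by (rule sup_eq[OF Kp B unif P0 P1 eqS])
    then have "Ru w = Rmax_formula t" unfolding w_def Ru_tuple inv RM S_def by simp
    then show ?thesis using wbox by blast
  qed
  show ?thesis using part1 part2 unfolding t_def by blast
qed

end
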